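(* Let $\mu,\nu$ be finite measures on $\mathbb R$ with finite first moments such that $\mu\le_E\nu$. Define $\tilde P^\nu_\mu:\mathbb R\to\mathbb R$ by $\tilde P^\nu_\mu(k)=\min\{P_\nu(k),\,C_\nu(k)+(\mu(\mathbb R)k-\overline\mu)\}$. Then the counter-shadow $T^\nu(\mu)$ of $\mu$ in $\nu$ satisfies $P_{T^\nu(\mu)}=(\tilde P^\nu_\mu)^c$. In particular, $T^\nu(\mu)$ is the measure given by the second distributional derivative of $(\tilde P^\nu_\mu)^c$.
   Context: For a finite measure $\eta$ on $\mathbb R$ with finite first moment: $\overline\eta=\int x\,\eta(dx)$, $P_\eta(k)=\int(k-x)^+\eta(dx)$, $C_\eta(k)=\int(x-k)^+\eta(dx)$. For measures $\eta,\chi$: $\eta\le\chi$ means $\eta(A)\le\chi(A)$ for all Borel $A$; $\eta\le_{cx}\chi$ means $\int f\,d\eta\le\int f\,d\chi$ for all convex $f:\mathbb R\to\mathbb R$; $\eta\le_E\chi$ means $\int f\,d\eta\le\int f\,d\chi$ for all non-negative convex $f$. For $u:\mathbb R\to\mathbb R$, $u^c$ is the largest convex function below $u$. The counter-shadow $T^\nu(\mu)$ (for $\mu\le_E\nu$) is the measure, known to exist and be unique, such that $\mu\le_{cx}T^\nu(\mu)$, $T^\nu(\mu)\le\nu$, and every measure $\eta$ with $\mu\le_{cx}\eta\le\nu$ satisfies $\eta\le_{cx}T^\nu(\mu)$. *)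

theory Defs
  imports "HOL-Probability.Probability"
begin

definition fin_meas1 :: "real measure \<Rightarrow> bool" where
  "fin_meas1 M \<longleftrightarrow> sets M = sets borel \<and> finite_measure M \<and> integrable M (\<lambda>x. x)"

definition bary :: "real measure \<Rightarrow> real" where
  "bary M = (\<integral>x. x \<partial>M)"

definition putf :: "real measure \<Rightarrow> real \<Rightarrow> real" where
  "putf M k = (\<integral>x. max (k - x) 0 \<partial>M)"

definition callf :: "real measure \<Rightarrow> real \<Rightarrow> real" where
  "callf M k = (\<integral>x. max (x - k) 0 \<partial>M)"

text \<open>Extended-real valued integral (positive part minus negative part); for convex
  f and a finite measure with finite first moment the negative part is finite.\<close>
definition ext_int :: "real measure \<Rightarrow> (real \<Rightarrow> real) \<Rightarrow> ereal" where
  "ext_int M f = enn2ereal (\<integral>\<^sup>+x. ennreal (f x) \<partial>M) - enn2ereal (\<integral>\<^sup>+x. ennreal (- f x) \<partial>M)"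

definition meas_le :: "real measure \<Rightarrow> real measure \<Rightarrow> bool" where
  "meas_le M N \<longleftrightarrow> (\<forall>A\<in>sets borel. emeasure M A \<le> emeasure N A)"

definition cx_le :: "real measure \<Rightarrow> real measure \<Rightarrow> bool" where
  "cx_le M N \<longleftrightarrow> (\<forall>f::real \<Rightarrow> real. convex_on UNIV f \<longrightarrow> ext_int M f \<le> ext_int N f)"

definition E_le :: "real measure \<Rightarrow> real measure \<Rightarrow> bool" where
  "E_le M N \<longleftrightarrow> (\<forall>f::real \<Rightarrow> real. convex_on UNIV f \<longrightarrow> (\<forall>x. 0 \<le> f x) \<longrightarrow>
      (\<integral>\<^sup>+x. ennreal (f x) \<partial>M) \<le> (\<integral>\<^sup>+x. ennreal (f x) \<partial>N))"

definition convex_env :: "(real \<Rightarrow> real) \<Rightarrow> real \<Rightarrow> real" where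
  "convex_env u x = Sup {g x | g. convex_on UNIV g \<and> (\<forall>y. g y \<le> u y)}"

definition counter_shadow :: "real measure \<Rightarrow> real measure \<Rightarrow> real measure" where
  "counter_shadow \<nu> \<mu> = (THE \<eta>. sets \<eta> = sets borel \<and> cx_le \<mu> \<eta> \<and> meas_le \<eta> \<nu> \<and>
      (\<forall>\<eta>'. sets \<eta>' = sets borel \<longrightarrow> cx_le \<mu> \<eta>' \<longrightarrow> meas_le \<eta>' \<nu> \<longrightarrow> cx_le \<eta>' \<eta>))"

definition Ptilde :: "real measure \<Rightarrow> real measure \<Rightarrow> real \<Rightarrow> real" where
  "Ptilde \<nu> \<mu> k = min (putf \<nu> k) (callf \<nu> k + (measure \<mu> UNIV * k - bary \<mu>))"

end

theory Submission
  imports Defs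
begin

lemma convex_pos_affine: "convex_on UNIV (\<lambda>x::real. max (a * x + c) 0)"
proof (rule convex_onI)
  fix t x y :: real assume t: "0 < t" "t < 1"
  have "a * ((1 - t) *\<^sub>R x + t *\<^sub>R y) + c = (1 - t) * (a * x + c) + t * (a * y + c)"
    by (simp add: algebra_simps)
  also have "\<dots> \<le> (1 - t) * max (a * x + c) 0 + t * max (a * y + c) 0"
    using t by (intro add_mono mult_left_mono) auto
  finally show "max (a * ((1 - t) *\<^sub>R x + t *\<^sub>R y) + c) 0 \<le> (1 - t) * max (a * x + c) 0 + t * max (a * y + c) 0"
    using t by (intro max.boundedI) auto
qed auto

lemma convex_put_fun: "convex_on UNIV (\<lambda>x::real. max (k - x) 0)"
  using convex_pos_affine[of "-1" k] by simp

lemma convex_call_fun: "convex_on UNIV (\<lambda>x::real. max (x - k) 0)"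
  using convex_pos_affine[of 1 "-k"] by simp

lemma fm_sets: "fin_meas1 M \<Longrightarrow> sets M = sets borel"
  by (simp add: fin_meas1_def)
lemma fm_space: "fin_meas1 M \<Longrightarrow> space M = UNIV"
  using sets_eq_imp_space_eq[OF fm_sets[of M]] by simp

lemma fm_finite: "fin_meas1 M \<Longrightarrow> finite_measure M"
  by (simp add: fin_meas1_def)
lemma fm_int_id: "fin_meas1 M \<Longrightarrow> integrable M (\<lambda>x. x)"
  by (simp add: fin_meas1_def)

lemma fm_meas: "fin_meas1 M \<Longrightarrow> f \<in> borel_measurable borel \<Longrightarrow> f \<in> borel_measurable M"
  by (simp add: measurable_cong_sets[OF fm_sets[of M] refl])

lemma fm_int_const: "fin_meas1 M \<Longrightarrow> integrable M (\<lambda>x. c::real)"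
  by (rule finite_measure.integrable_const[OF fm_finite])

lemma fm_int_affine: "fin_meas1 M \<Longrightarrow> integrable M (\<lambda>x. a * x + c::real)"
proof -
  assume M: "fin_meas1 M"
  have "integrable M (\<lambda>x. a * x)" using fm_int_id[OF M] by (rule Bochner_Integration.integrable_mult_right)
  then show ?thesis using fm_int_const[OF M, of c] by (rule Bochner_Integration.integrable_add)
qed

lemma fm_int_put: "fin_meas1 M \<Longrightarrow> integrable M (\<lambda>x. max (k - x) 0)"
  using fm_int_affine[of M "-1" k] by (intro integrable_max integrable_zero) simp_all

lemma fm_int_call: "fin_meas1 M \<Longrightarrow> integrable M (\<lambda>x. max (x - k) 0)"
  using fm_int_affine[of M "1" "-k"] by (intro integrable_max integrable_zero) simp_all

lemma parity: "fin_meas1 M \<Longrightarrow> putf M k = callf M k + measure M UNIV * k - bary M"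
proof -
  assume M: "fin_meas1 M"
  have "putf M k = (\<integral>x. max (x - k) 0 + (k - x) \<partial>M)"
    unfolding putf_def by (rule Bochner_Integration.integral_cong) auto
  also have "\<dots> = callf M k + (\<integral>x. k \<partial>M) - bary M"
    unfolding callf_def bary_def
    using fm_int_call[OF M, of k] fm_int_const[OF M, of k] fm_int_id[OF M]
    by (simp add: Bochner_Integration.integral_add Bochner_Integration.integral_diff)
  also have "(\<integral>x. k \<partial>M) = measure M UNIV * k"
    using fm_space[OF M] by simp
  finally show ?thesis .
qed

lemma put_nonneg: "putf M k \<ge> 0"
  unfolding putf_def by (rule Bochner_Integration.integral_nonneg) auto
lemma call_nonneg: "callf M k \<ge> 0"
  unfolding callf_def by (rule Bochner_Integration.integral_nonneg) auto

lemma put_mono: "fin_meas1 M \<Longrightarrow> k \<le> k' \<Longrightarrow> putf M k \<le> putf M k'"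
  unfolding putf_def by (intro integral_mono fm_int_put) auto
lemma call_mono: "fin_meas1 M \<Longrightarrow> k \<le> k' \<Longrightarrow> callf M k' \<le> callf M k"
  unfolding callf_def by (intro integral_mono fm_int_call) auto

lemma put_convex: "fin_meas1 M \<Longrightarrow> convex_on UNIV (putf M)"
proof (rule convex_onI)
  fix t x y :: real assume M: "fin_meas1 M" and t: "0 < t" "t < 1"
  have "putf M ((1 - t) *\<^sub>R x + t *\<^sub>R y) \<le> (\<integral>z. (1 - t) * max (x - z) 0 + t * max (y - z) 0 \<partial>M)"
    unfolding putf_def
  proof (intro integral_mono fm_int_put M)
    show "integrable M (\<lambda>z. (1 - t) * max (x - z) 0 + t * max (y - z) 0)"
      using fm_int_put[OF M] by auto
    fix z
    show "max ((1 - t) *\<^sub>R x + t *\<^sub>R y - z) 0 \<le> (1 - t) * max (x - z) 0 + t * max (y - z) 0"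
      using convex_onD[OF convex_call_fun[of z], of t x y] t by simp
  qed
  also have "\<dots> = (1 - t) * putf M x + t * putf M y"
    unfolding putf_def using fm_int_put[OF M] by simp
  finally show "putf M ((1 - t) *\<^sub>R x + t *\<^sub>R y) \<le> (1 - t) * putf M x + t * putf M y" .
qed auto

lemma enn2ereal_fin: "(A::ennreal) < \<infinity> \<Longrightarrow> enn2ereal A = ereal (enn2real A)"
proof -
  assume "A < \<infinity>"
  then have "A = ennreal (enn2real A)" by (simp add: ennreal_enn2real less_top[symmetric])
  then have "enn2ereal A = enn2ereal (ennreal (enn2real A))" by (rule arg_cong)
  also have "\<dots> = ereal (enn2real A)" by (rule enn2ereal_ennreal[OF enn2real_nonneg])
  finally show ?thesis .
qed

lemma ext_int_integrable:
  assumes "integrable M f" shows "ext_int M f = ereal (integral\<^sup>L M f)"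
proof -
  have nf: "(\<integral>\<^sup>+x. ennreal (norm (f x)) \<partial>M) < \<infinity>" using assms by (simp add: integrable_iff_bounded)
  have a: "(\<integral>\<^sup>+x. ennreal (f x) \<partial>M) < \<infinity>"
    by (rule le_less_trans[OF _ nf]) (intro nn_integral_mono, auto)
  have b: "(\<integral>\<^sup>+x. ennreal (- f x) \<partial>M) < \<infinity>"
    by (rule le_less_trans[OF _ nf]) (intro nn_integral_mono, auto)
  have ea: "enn2ereal (\<integral>\<^sup>+x. ennreal (f x) \<partial>M) = ereal (enn2real (\<integral>\<^sup>+x. ennreal (f x) \<partial>M))"
    using a by (rule enn2ereal_fin)
  have eb: "enn2ereal (\<integral>\<^sup>+x. ennreal (- f x) \<partial>M) = ereal (enn2real (\<integral>\<^sup>+x. ennreal (- f x) \<partial>M))"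
    using b by (rule enn2ereal_fin)
  show ?thesis unfolding ext_int_def ea eb real_lebesgue_integral_def[OF assms] by simp
qed

lemma ext_int_nonneg:
  assumes "\<And>x. 0 \<le> f x" shows "ext_int M f = enn2ereal (\<integral>\<^sup>+x. ennreal (f x) \<partial>M)"
proof -
  have "(\<integral>\<^sup>+x. ennreal (- f x) \<partial>M) = 0"
    using assms by (subst nn_integral_0_iff_AE) (auto simp: ennreal_neg)
  then show ?thesis unfolding ext_int_def by (simp add: zero_ennreal.rep_eq)
qed

lemma nn_put: "fin_meas1 M \<Longrightarrow> (\<integral>\<^sup>+x. ennreal (max (k - x) 0) \<partial>M) = ennreal (putf M k)"
  unfolding putf_def by (rule nn_integral_eq_integral) (auto intro: fm_int_put)
lemma nn_call: "fin_meas1 M \<Longrightarrow> (\<integral>\<^sup>+x. ennreal (max (x - k) 0) \<partial>M) = ennreal (callf M k)"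
  unfolding callf_def by (rule nn_integral_eq_integral) (auto intro: fm_int_call)

lemma fm_emeasure_fin: "fin_meas1 M \<Longrightarrow> emeasure M A < \<infinity>"
  using fm_finite[of M] finite_measure.emeasure_finite[of M A] by (simp add: less_top)

lemma fm_nn_one: "fin_meas1 M \<Longrightarrow> (\<integral>\<^sup>+x. ennreal 1 \<partial>M) = ennreal (measure M UNIV)"
  using fm_space[of M] fm_emeasure_fin[of M UNIV]
  by (simp add: emeasure_eq_ennreal_measure less_top)

lemma E_le_put: "fin_meas1 \<mu> \<Longrightarrow> fin_meas1 \<nu> \<Longrightarrow> E_le \<mu> \<nu> \<Longrightarrow> putf \<mu> k \<le> putf \<nu> k"
proof -
  assume a: "fin_meas1 \<mu>" "fin_meas1 \<nu>" "E_le \<mu> \<nu>"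
  have h: "convex_on UNIV f \<Longrightarrow> (\<And>x. 0 \<le> f x) \<Longrightarrow> (\<integral>\<^sup>+x. ennreal (f x) \<partial>\<mu>) \<le> (\<integral>\<^sup>+x. ennreal (f x) \<partial>\<nu>)" for f
    using a(3) unfolding E_le_def by blast
  have "(\<integral>\<^sup>+x. ennreal (max (k - x) 0) \<partial>\<mu>) \<le> (\<integral>\<^sup>+x. ennreal (max (k - x) 0) \<partial>\<nu>)"
    by (rule h[OF convex_put_fun[of k]]) simp
  then show ?thesis unfolding nn_put[OF a(1)] nn_put[OF a(2)] by (simp add: ennreal_le_iff put_nonneg)
qed

lemma E_le_call: "fin_meas1 \<mu> \<Longrightarrow> fin_meas1 \<nu> \<Longrightarrow> E_le \<mu> \<nu> \<Longrightarrow> callf \<mu> k \<le> callf \<nu> k"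
proof -
  assume a: "fin_meas1 \<mu>" "fin_meas1 \<nu>" "E_le \<mu> \<nu>"
  have h: "convex_on UNIV f \<Longrightarrow> (\<And>x. 0 \<le> f x) \<Longrightarrow> (\<integral>\<^sup>+x. ennreal (f x) \<partial>\<mu>) \<le> (\<integral>\<^sup>+x. ennreal (f x) \<partial>\<nu>)" for f
    using a(3) unfolding E_le_def by blast
  have "(\<integral>\<^sup>+x. ennreal (max (x - k) 0) \<partial>\<mu>) \<le> (\<integral>\<^sup>+x. ennreal (max (x - k) 0) \<partial>\<nu>)"
    by (rule h[OF convex_call_fun[of k]]) simp
  then show ?thesis unfolding nn_call[OF a(1)] nn_call[OF a(2)] by (simp add: ennreal_le_iff call_nonneg)
qed

lemma E_le_mass: "fin_meas1 \<mu> \<Longrightarrow> fin_meas1 \<nu> \<Longrightarrow> E_le \<mu> \<nu> \<Longrightarrow> measure \<mu> UNIV \<le> measure \<nu> UNIV"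
proof -
  assume a: "fin_meas1 \<mu>" "fin_meas1 \<nu>" "E_le \<mu> \<nu>"
  have h: "convex_on UNIV f \<Longrightarrow> (\<And>x. 0 \<le> f x) \<Longrightarrow> (\<integral>\<^sup>+x. ennreal (f x) \<partial>\<mu>) \<le> (\<integral>\<^sup>+x. ennreal (f x) \<partial>\<nu>)" for f
    using a(3) unfolding E_le_def by blast
  have "(\<integral>\<^sup>+x. ennreal 1 \<partial>\<mu>) \<le> (\<integral>\<^sup>+x. ennreal 1 \<partial>\<nu>)"
    by (rule h) (simp_all add: convex_on_const)
  then show ?thesis unfolding fm_nn_one[OF a(1)] fm_nn_one[OF a(2)] by (simp add: ennreal_le_iff)
qed

lemma meas_le_imp:
  assumes "fin_meas1 \<nu>" "sets \<eta> = sets borel" "meas_le \<eta> \<nu>"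
  shows "\<eta> \<le> \<nu>" "fin_meas1 \<eta>"
proof -
  have sp0: "space \<eta> = UNIV" using sets_eq_imp_space_eq[OF assms(2)] by simp
  have sp: "space \<eta> = space \<nu>" using sp0 fm_space[OF assms(1)] by simp
  have "emeasure \<eta> \<le> emeasure \<nu>"
  proof (rule le_funI)
    fix A show "emeasure \<eta> A \<le> emeasure \<nu> A"
    proof (cases "A \<in> sets borel")
      case True then show ?thesis using assms(3) meas_le_def by blast
    next
      case False then show ?thesis using assms(2) by (simp add: emeasure_notin_sets)
    qed
  qed
  then show le: "\<eta> \<le> \<nu>" using sp assms(1,2) by (simp add: le_measure_iff fm_sets)
  have s: "sets \<eta> = sets \<nu>" using assms(1,2) fm_sets by auto
  have "emeasure \<eta> (space \<eta>) \<le> emeasure \<nu> (space \<nu>)"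
    using \<open>emeasure \<eta> \<le> emeasure \<nu>\<close> sp by (simp add: le_fun_def)
  then have fin: "finite_measure \<eta>"
    using fm_emeasure_fin[OF assms(1), of "space \<nu>"] by (intro finite_measureI) (simp add: top.extremum_unique)
  have "(\<integral>\<^sup>+x. ennreal (norm x) \<partial>\<eta>) \<le> (\<integral>\<^sup>+x. ennreal (norm x) \<partial>\<nu>)"
    by (rule nn_integral_mono_measure[OF s le])
  also have "\<dots> < \<infinity>" using fm_int_id[OF assms(1)] by (simp add: integrable_iff_bounded)
  finally have "integrable \<eta> (\<lambda>x. x)"
    using assms(2) by (intro integrableI_bounded) (auto simp: measurable_cong_sets[OF assms(2) refl])
  then show "fin_meas1 \<eta>" using fin assms(2) by (simp add: fin_meas1_def)
qed

lemma le_put: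
  assumes "fin_meas1 \<nu>" "sets \<eta> = sets borel" "meas_le \<eta> \<nu>"
  shows "putf \<eta> k \<le> putf \<nu> k" "callf \<eta> k \<le> callf \<nu> k"
proof -
  note h = meas_le_imp[OF assms]
  have s: "sets \<eta> = sets \<nu>" using assms(1,2) fm_sets by auto
  show "putf \<eta> k \<le> putf \<nu> k"
    using nn_integral_mono_measure[OF s h(1), of "\<lambda>x. ennreal (max (k - x) 0)"]
    unfolding nn_put[OF h(2)] nn_put[OF assms(1)] by (simp add: ennreal_le_iff put_nonneg)
  show "callf \<eta> k \<le> callf \<nu> k"
    using nn_integral_mono_measure[OF s h(1), of "\<lambda>x. ennreal (max (x - k) 0)"]
    unfolding nn_call[OF h(2)] nn_call[OF assms(1)] by (simp add: ennreal_le_iff call_nonneg)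
qed

lemma convex_affine: "convex_on UNIV (\<lambda>x::real. a * x + c)"
  by (rule convex_onI) (auto simp: algebra_simps)

lemma ext_int_affine: "fin_meas1 M \<Longrightarrow> ext_int M (\<lambda>x. a * x + c) = ereal (a * bary M + c * measure M UNIV)"
  using fm_int_id[of M] fm_int_const[of M c] fm_space[of M]
  by (subst ext_int_integrable[OF fm_int_affine]) (auto simp: bary_def)

lemma cx_mass_bary:
  assumes "fin_meas1 \<mu>" "fin_meas1 \<eta>" "cx_le \<mu> \<eta>"
  shows "measure \<mu> UNIV = measure \<eta> UNIV" "bary \<mu> = bary \<eta>"
proof -
  have h: "ext_int \<mu> (\<lambda>x. a * x + c) \<le> ext_int \<eta> (\<lambda>x. a * x + c)" for a c
    using assms(3) convex_affine unfolding cx_le_def by blast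
  have "a * bary \<mu> + c * measure \<mu> UNIV \<le> a * bary \<eta> + c * measure \<eta> UNIV" for a c
    using h[of a c] by (simp add: ext_int_affine assms)
  from this[of 0 1] this[of 0 "-1"] this[of 1 0] this[of "-1" 0]
  show "measure \<mu> UNIV = measure \<eta> UNIV" "bary \<mu> = bary \<eta>" by auto
qed

lemma put_small:
  assumes M: "fin_meas1 M" and e: "0 < e" shows "\<exists>k. putf M k < e"
proof -
  have "(\<lambda>i. \<integral>x. max (- real i - x) 0 \<partial>M) \<longlonglongrightarrow> (\<integral>x. 0 \<partial>M)"
  proof (rule integral_dominated_convergence[where w="\<lambda>x. norm x"])
    show "integrable M (\<lambda>x. norm x)" using fm_int_id[OF M] by auto
    show "AE x in M. (\<lambda>i. max (- real i - x) 0) \<longlonglongrightarrow> 0"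
    proof (rule AE_I2)
      fix x :: real
      have "eventually (\<lambda>i. max (- real i - x) 0 = 0) sequentially"
        using eventually_ge_at_top[of "nat \<lceil>- x\<rceil>"] by eventually_elim linarith
      then show "(\<lambda>i. max (- real i - x) 0) \<longlonglongrightarrow> 0" by (rule tendsto_eventually)
    qed
    show "\<And>i. AE x in M. norm (max (- real i - x) 0) \<le> norm x" by (intro AE_I2) auto
  qed (auto simp: fm_meas[OF M])
  then have "(\<lambda>i. putf M (- real i)) \<longlonglongrightarrow> 0" by (simp add: putf_def)
  from order_tendstoD(2)[OF this e] obtain i where "putf M (- real i) < e"
    by (auto simp: eventually_sequentially)
  then show ?thesis by blast
qed

lemma call_small:
  assumes M: "fin_meas1 M" and e: "0 < e" shows "\<exists>k. callf M k < e"
proof -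
  have "(\<lambda>i. \<integral>x. max (x - real i) 0 \<partial>M) \<longlonglongrightarrow> (\<integral>x. 0 \<partial>M)"
  proof (rule integral_dominated_convergence[where w="\<lambda>x. norm x"])
    show "integrable M (\<lambda>x. norm x)" using fm_int_id[OF M] by auto
    show "AE x in M. (\<lambda>i. max (x - real i) 0) \<longlonglongrightarrow> 0"
    proof (rule AE_I2)
      fix x :: real
      have "eventually (\<lambda>i. max (x - real i) 0 = 0) sequentially"
        using eventually_ge_at_top[of "nat \<lceil>x\<rceil>"] by eventually_elim linarith
      then show "(\<lambda>i. max (x - real i) 0) \<longlonglongrightarrow> 0" by (rule tendsto_eventually)
    qed
    show "\<And>i. AE x in M. norm (max (x - real i) 0) \<le> norm x" by (intro AE_I2) auto
  qed (auto simp: fm_meas[OF M])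
  then have "(\<lambda>i. callf M (real i)) \<longlonglongrightarrow> 0" by (simp add: callf_def)
  from order_tendstoD(2)[OF this e] obtain i where "callf M (real i) < e"
    by (auto simp: eventually_sequentially)
  then show ?thesis by blast
qed

lemma convex_between:
  fixes \<psi> :: "real \<Rightarrow> real"
  assumes "convex_on UNIV \<psi>" "y < k" "k < z"
  shows "\<psi> k \<le> ((z - k) * \<psi> y + (k - y) * \<psi> z) / (z - y)"
proof -
  define t where "t = (k - y) / (z - y)"
  have t: "0 \<le> t" "t \<le> 1" using assms by (auto simp: t_def field_simps)
  have tz: "t * (z - y) = k - y" using assms by (simp add: t_def)
  have k: "k = (1 - t) *\<^sub>R y + t *\<^sub>R z" using tz by (simp add: algebra_simps)
  have "\<psi> k \<le> (1 - t) * \<psi> y + t * \<psi> z" using convex_onD[OF assms(1) t] k by simp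
  also have "\<dots> = ((z - k) * \<psi> y + (k - y) * \<psi> z) / (z - y)"
  proof -
    have "1 - t = (z - k) / (z - y)" using assms by (simp add: t_def field_simps)
    then show ?thesis by (simp add: t_def add_divide_distrib)
  qed
  finally show ?thesis .
qed

lemma put_rderiv:
  assumes M: "fin_meas1 M"
  shows "((\<lambda>y. (putf M y - putf M a) / (y - a)) \<longlongrightarrow> measure M {..a}) (at_right a)"
  unfolding tendsto_at_iff_sequentially
proof (intro allI impI)
  fix X :: "nat \<Rightarrow> real" assume X: "\<forall>i. X i \<in> {a<..} - {a}" "X \<longlonglongrightarrow> a"
  have Xa: "a < X i" for i using X(1) by auto
  define g where "g i x = (max (X i - x) 0 - max (a - x) 0) / (X i - a)" for i x
  have eq: "(putf M (X i) - putf M a) / (X i - a) = integral\<^sup>L M (g i)" for i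
    unfolding putf_def g_def
    using fm_int_put[OF M, of "X i"] fm_int_put[OF M, of a]
    by (simp add: Bochner_Integration.integral_diff)
  have "(\<lambda>i. integral\<^sup>L M (g i)) \<longlonglongrightarrow> integral\<^sup>L M (indicator {..a} :: real \<Rightarrow> real)"
  proof (rule integral_dominated_convergence[where w="\<lambda>x. 1"])
    show "integrable M (\<lambda>x. 1::real)" by (rule fm_int_const[OF M])
    show "indicator {..a} \<in> borel_measurable M" by (rule fm_meas[OF M]) simp
    show "\<And>i. g i \<in> borel_measurable M" unfolding g_def by (rule fm_meas[OF M]) simp
    show "AE x in M. (\<lambda>i. g i x) \<longlonglongrightarrow> indicator {..a} x"
    proof (rule AE_I2)
      fix x
      show "(\<lambda>i. g i x) \<longlonglongrightarrow> indicator {..a} x"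
      proof (cases "x \<le> a")
        case True
        have "g i x = 1" for i using Xa[of i] True by (simp add: g_def)
        then show ?thesis using True by simp
      next
        case False
        then have "eventually (\<lambda>i. X i < x) sequentially"
          using order_tendstoD(2)[OF X(2)] by simp
        then have "eventually (\<lambda>i. g i x = 0) sequentially"
          by eventually_elim (use False in \<open>simp add: g_def\<close>)
        then show ?thesis using False by (simp add: tendsto_eventually)
      qed
    qed
    show "AE x in M. norm (g i x) \<le> 1" for i
    proof (rule AE_I2)
      fix x
      have "\<bar>max (X i - x) 0 - max (a - x) 0\<bar> \<le> X i - a" using Xa[of i] by auto
      then show "norm (g i x) \<le> 1" using Xa[of i] by (simp add: g_def abs_div_pos)
    qed
  qed
  also have "integral\<^sup>L M (indicator {..a} :: real \<Rightarrow> real) = measure M {..a}"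
    using fm_emeasure_fin[OF M, of "{..a}"] fm_sets[OF M] by (simp add: less_top)
  finally show "((\<lambda>y. (putf M y - putf M a) / (y - a)) \<circ> X) \<longlonglongrightarrow> measure M {..a}"
    by (simp add: o_def eq)
qed

lemma meas_eq_cdf:
  assumes M: "fin_meas1 M" and N: "fin_meas1 N"
    and tot: "measure M UNIV = measure N UNIV" and cdf: "\<And>a. measure M {..a} = measure N {..a}"
  shows "M = N"
proof (rule measure_eqI_lessThan)
  show "sets M = sets borel" "sets N = sets borel" using M N by (simp_all add: fm_sets)
  show "emeasure M {x<..} < \<infinity>" for x using fm_emeasure_fin[OF M] .
  fix x :: real
  have c: "{x<..} = space M - {..x}" "{x<..} = space N - {..x}"
    using fm_space[OF M] fm_space[OF N] by auto
  have "{..x} \<in> sets M" using fm_sets[OF M] by simp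
  then have "measure M {x<..} = measure M UNIV - measure M {..x}"
    unfolding c(1) using finite_measure.finite_measure_compl[OF fm_finite[OF M]] fm_space[OF M]
    by simp
  moreover have "{..x} \<in> sets N" using fm_sets[OF N] by simp
  then have "measure N {x<..} = measure N UNIV - measure N {..x}"
    unfolding c(2) using finite_measure.finite_measure_compl[OF fm_finite[OF N]] fm_space[OF N]
    by simp
  ultimately have "measure M {x<..} = measure N {x<..}" using tot cdf by simp
  then show "emeasure M {x<..} = emeasure N {x<..}"
    using fm_finite[OF M] fm_finite[OF N] by (simp add: finite_measure.emeasure_eq_measure)
qed

lemma meas_eq_put:
  assumes M: "fin_meas1 M" and N: "fin_meas1 N"
    and tot: "measure M UNIV = measure N UNIV" and p: "\<And>k. putf M k = putf N k"
  shows "M = N"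
proof (rule meas_eq_cdf[OF M N tot])
  fix a
  show "measure M {..a} = measure N {..a}"
    using put_rderiv[OF M, of a] put_rderiv[OF N, of a] unfolding p
    by (rule tendsto_unique[rotated]) simp
qed

definition gT :: "real \<Rightarrow> real \<Rightarrow> nat \<Rightarrow> real" where "gT x0 d i = x0 + real i * d"
definition gs :: "(real \<Rightarrow> real) \<Rightarrow> real \<Rightarrow> real \<Rightarrow> nat \<Rightarrow> real" where
  "gs h x0 d i = (h (gT x0 d i) - h (gT x0 d i - d)) / d"
definition gphi :: "(real \<Rightarrow> real) \<Rightarrow> real \<Rightarrow> real \<Rightarrow> nat \<Rightarrow> real \<Rightarrow> real" where
  "gphi h x0 d N y = (\<Sum>i\<in>{1..N}. (gs h x0 d i - gs h x0 d (i - 1)) * max (y - gT x0 d i) 0)"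

lemma chord_right:
  fixes h :: "real \<Rightarrow> real"
  assumes "convex_on UNIV h" "a < b" "b \<le> y"
  shows "h b + (h b - h a) / (b - a) * (y - b) \<le> h y"
proof (cases "b = y")
  case False
  then have byy: "b < y" using assms by simp
  have "h b \<le> ((y - b) * h a + (b - a) * h y) / (y - a)"
    using convex_between[OF assms(1) assms(2) byy] .
  then have "h b * (y - a) \<le> (y - b) * h a + (b - a) * h y"
    using assms by (simp add: field_simps)
  then have "(h b - h a) * (y - b) \<le> (h y - h b) * (b - a)"
    by (simp add: algebra_simps)
  then have "(h b - h a) / (b - a) * (y - b) \<le> h y - h b"
    using assms by (simp add: field_simps)
  then show ?thesis by simp
qed simp

locale gridh =
  fixes h :: "real \<Rightarrow> real" and x0 d :: real
  assumes cvx: "convex_on UNIV h" and mo: "mono h" and zero: "\<And>x. x \<le> x0 \<Longrightarrow> h x = 0" and dpos: "d > 0"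
begin

abbreviation "T \<equiv> gT x0 d"
abbreviation "s \<equiv> gs h x0 d"
abbreviation "\<phi> \<equiv> gphi h x0 d"

lemma nonneg: "0 \<le> h x"
proof -
  have "h (min x x0) \<le> h x" using mo by (simp add: monoD)
  then show ?thesis using zero[of "min x x0"] by simp
qed

lemma T_Suc: "T (Suc i) = T i + d" by (simp add: gT_def algebra_simps)
lemma T_mono: "i \<le> j \<Longrightarrow> T i \<le> T j" using dpos by (simp add: gT_def mult_right_mono)

lemma s0: "s 0 = 0" using zero[of x0] zero[of "x0 - d"] dpos by (simp add: gs_def gT_def)
lemma s_nonneg: "0 \<le> s i"
  using mo dpos unfolding gs_def by (simp add: monoD)
lemma s_step: "s i \<le> s (Suc i)"
proof -
  have "h (T i) \<le> ((T i + d - T i) * h (T i - d) + (T i - (T i - d)) * h (T i + d)) / (T i + d - (T i - d))"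
    using dpos by (intro convex_between[OF cvx]) auto
  then have "d * (2 * h (T i)) \<le> d * (h (T i - d) + h (T i + d))" using dpos by (simp add: field_simps add.commute)
  then have "2 * h (T i) \<le> h (T i - d) + h (T i + d)" using dpos by simp
  then show ?thesis using dpos unfolding gs_def T_Suc by (simp add: divide_right_mono)
qed
lemma s_mono: "i \<le> j \<Longrightarrow> s i \<le> s j"
  using s_step by (rule lift_Suc_mono_le)

lemma s_mul: "s i * d = h (T i) - h (T i - d)" using dpos by (simp add: gs_def)

lemma phi_Suc: "\<phi> (Suc N) y = \<phi> N y + (s (Suc N) - s N) * max (y - T (Suc N)) 0"
  unfolding gphi_def by simp

lemma phi_C: "T N \<le> y \<Longrightarrow> \<phi> N y = h (T N - d) + s N * (y - T N)"
proof (induction N arbitrary: y)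
  case 0
  then show ?case using zero[of "x0 - d"] dpos by (simp add: gphi_def s0 gT_def)
next
  case (Suc N)
  have y: "T N \<le> y" using Suc.prems T_mono[of N "Suc N"] by simp
  have "\<phi> (Suc N) y = h (T N - d) + s N * (y - T N) + (s (Suc N) - s N) * (y - T (Suc N))"
    using Suc.IH[OF y] Suc.prems by (simp add: phi_Suc)
  also have "\<dots> = h (T N - d) + s N * d + s (Suc N) * (y - T (Suc N))"
    by (simp add: T_Suc algebra_simps)
  also have "\<dots> = h (T (Suc N) - d) + s (Suc N) * (y - T (Suc N))"
    by (simp add: s_mul T_Suc)
  finally show ?case .
qed

lemma phi_D: "K \<le> N \<Longrightarrow> y \<le> T (Suc K) \<Longrightarrow> \<phi> N y = \<phi> K y"
proof (induction N rule: dec_induct)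
  case (step n)
  have "y \<le> T (Suc n)" using step.prems T_mono[of "Suc K" "Suc n"] step.hyps by simp
  then show ?case using step by (simp add: phi_Suc)
qed simp

lemma phi_E: "K \<le> N \<Longrightarrow> T K \<le> y \<Longrightarrow> (K = N \<or> y \<le> T (Suc K)) \<Longrightarrow> \<phi> N y = h (T K - d) + s K * (y - T K)"
  using phi_D phi_C by metis

lemma floor_idx:
  assumes "x0 \<le> y"
  defines "K \<equiv> nat \<lfloor>(y - x0) / d\<rfloor>"
  shows "T K \<le> y" "y < T (Suc K)"
proof -
  have q: "0 \<le> (y - x0) / d" using assms dpos by simp
  have "real K \<le> (y - x0) / d" using q by (simp add: K_def)
  then show "T K \<le> y" using dpos by (simp add: gT_def field_simps)
  have "(y - x0) / d < real K + 1" using q by (simp add: K_def)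
  then show "y < T (Suc K)" using dpos by (simp add: gT_def field_simps)
qed

lemma phi_le: "\<phi> N y \<le> h y"
proof (cases "x0 \<le> y")
  case False
  have "\<phi> N y = \<phi> 0 y" using False dpos by (intro phi_D) (auto simp: gT_def)
  then show ?thesis using nonneg by (simp add: gphi_def)
next
  case True
  define K where "K = min N (nat \<lfloor>(y - x0) / d\<rfloor>)"
  have KN: "K \<le> N" by (simp add: K_def)
  have TK: "T K \<le> y" using floor_idx(1)[OF True] T_mono[of K "nat \<lfloor>(y - x0) / d\<rfloor>"] by (simp add: K_def)
  have alt: "K = N \<or> y \<le> T (Suc K)" using floor_idx(2)[OF True] by (auto simp: K_def min_def)
  have "\<phi> N y = h (T K - d) + s K * (y - T K)" by (rule phi_E[OF KN TK alt])
  also have "\<dots> \<le> h (T K) + (h (T K) - h (T K - d)) / (T K - (T K - d)) * (y - T K)"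
  proof -
    have "h (T K - d) \<le> h (T K)" using dpos by (intro monoD[OF mo]) simp
    then show ?thesis by (simp add: gs_def)
  qed
  also have "\<dots> \<le> h y" using dpos TK by (intro chord_right[OF cvx]) auto
  finally show ?thesis .
qed

lemma phi_ge:
  assumes "x0 \<le> y" "(y - x0) / d \<le> real N"
  shows "h (y - 2 * d) \<le> \<phi> N y"
proof -
  define K where "K = nat \<lfloor>(y - x0) / d\<rfloor>"
  have KN: "K \<le> N" using assms(2) by (simp add: K_def nat_le_iff floor_le_iff)
  have TK: "T K \<le> y" "y < T (Suc K)" using floor_idx[OF assms(1)] by (simp_all add: K_def)
  have "h (y - 2 * d) \<le> h (T K - d)" using TK(2) T_Suc[of K] by (intro monoD[OF mo]) simp
  also have "\<dots> \<le> h (T K - d) + s K * (y - T K)" using s_nonneg[of K] TK(1) by simp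
  also have "\<dots> = \<phi> N y" using TK(2) phi_E[OF KN TK(1)] by simp
  finally show ?thesis .
qed

lemma phi_coeff_nonneg: "i \<in> {1..N} \<Longrightarrow> 0 \<le> s i - s (i - 1)"
  using s_mono[of "i - 1" i] by simp

end

lemma core:
  fixes M N :: "real measure" and g h :: "real \<Rightarrow> real"
  assumes sM: "sets M = sets borel" and sN: "sets N = sets borel" and gm: "g \<in> borel_measurable borel"
    and calls: "\<And>k. (\<integral>\<^sup>+x. ennreal (max (g x - k) 0) \<partial>M) \<le> (\<integral>\<^sup>+x. ennreal (max (g x - k) 0) \<partial>N)"
    and cvx: "convex_on UNIV h" and mo: "mono h" and zero: "\<And>x. x \<le> x0 \<Longrightarrow> h x = 0"
  shows "(\<integral>\<^sup>+x. ennreal (h (g x)) \<partial>M) \<le> (\<integral>\<^sup>+x. ennreal (h (g x)) \<partial>N)"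
proof -
  define d where "d j = inverse (real (Suc j))" for j
  define NN where "NN j = (Suc j)^2" for j
  define \<phi> where "\<phi> j y = gphi h x0 (d j) (NN j) y" for j y
  have dpos: "d j > 0" for j by (simp add: d_def)
  interpret G: gridh h x0 "d j" for j using cvx mo zero dpos by unfold_locales auto
  have hc: "continuous_on UNIV h" using convex_on_continuous[OF open_UNIV cvx] .
  have hm: "h \<in> borel_measurable borel" using hc by (rule borel_measurable_continuous_onI)
  have measM: "f \<in> borel_measurable borel \<Longrightarrow> f \<in> borel_measurable M" for f :: "real \<Rightarrow> ennreal"
    by (simp add: measurable_cong_sets[OF sM refl])
  have measN: "f \<in> borel_measurable borel \<Longrightarrow> f \<in> borel_measurable N" for f :: "real \<Rightarrow> ennreal"
    by (simp add: measurable_cong_sets[OF sN refl])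
  have phim: "(\<lambda>x. ennreal (\<phi> j (g x))) \<in> borel_measurable borel" for j
    unfolding \<phi>_def gphi_def using gm by measurable
  have hgm: "(\<lambda>x. ennreal (h (g x))) \<in> borel_measurable borel"
    using hm gm by measurable
  have step1: "(\<integral>\<^sup>+x. ennreal (\<phi> j (g x)) \<partial>M) \<le> (\<integral>\<^sup>+x. ennreal (\<phi> j (g x)) \<partial>N)" for j
  proof -
    define c where "c i = gs h x0 (d j) i - gs h x0 (d j) (i - 1)" for i
    have c0: "i \<in> {1..NN j} \<Longrightarrow> 0 \<le> c i" for i unfolding c_def by (rule G.phi_coeff_nonneg)
    have e: "ennreal (\<phi> j y) = (\<Sum>i\<in>{1..NN j}. ennreal (c i) * ennreal (max (y - gT x0 (d j) i) 0))" for y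
      unfolding \<phi>_def gphi_def c_def[symmetric]
      by (subst sum_ennreal[symmetric]) (auto simp: c0 ennreal_mult)
    have int: "(\<integral>\<^sup>+x. ennreal (\<phi> j (g x)) \<partial>L) =
       (\<Sum>i\<in>{1..NN j}. ennreal (c i) * (\<integral>\<^sup>+x. ennreal (max (g x - gT x0 (d j) i) 0) \<partial>L))"
      if sL: "sets L = sets borel" for L
    proof -
      have ml: "f \<in> borel_measurable borel \<Longrightarrow> f \<in> borel_measurable L" for f :: "real \<Rightarrow> ennreal"
        by (simp add: measurable_cong_sets[OF sL refl])
      note gm[measurable]
      show ?thesis unfolding e
        apply (subst nn_integral_sum)
         apply (rule ml) apply measurable
        apply (rule sum.cong[OF refl])
        apply (rule nn_integral_cmult)
        apply (rule ml) apply measurable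
        done
    qed
    show ?thesis unfolding int[OF sM] int[OF sN]
      by (intro sum_mono mult_left_mono calls) auto
  qed
  have step2: "ennreal (h y) \<le> liminf (\<lambda>j. ennreal (\<phi> j y))" for y
  proof (cases "y \<le> x0")
    case True then show ?thesis using zero by simp
  next
    case False
    have ev: "eventually (\<lambda>j. ennreal (h (y - 2 * d j)) \<le> ennreal (\<phi> j y)) sequentially"
    proof -
      obtain J :: nat where J: "y - x0 \<le> real J" using real_arch_simple by blast
      have "ennreal (h (y - 2 * d j)) \<le> ennreal (\<phi> j y)" if "J \<le> j" for j
      proof -
        have "(y - x0) / d j = (y - x0) * real (Suc j)" by (simp add: d_def divide_inverse)
        also have "\<dots> \<le> real (Suc j) * real (Suc j)"
          using J that False by (intro mult_right_mono) auto
        also have "\<dots> = real (NN j)" unfolding NN_def power2_eq_square of_nat_mult by simp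
        finally have "(y - x0) / d j \<le> real (NN j)" .
        then have "h (y - 2 * d j) \<le> \<phi> j y"
          unfolding \<phi>_def using False by (intro G.phi_ge) auto
        then show ?thesis by (simp add: ennreal_leI)
      qed
      then show ?thesis unfolding eventually_sequentially by blast
    qed
    have "(\<lambda>j. y - 2 * d j) \<longlonglongrightarrow> y - 2 * 0"
      unfolding d_def by (intro tendsto_intros LIMSEQ_inverse_real_of_nat)
    then have "(\<lambda>j. h (y - 2 * d j)) \<longlonglongrightarrow> h y"
      using hc by (simp add: continuous_on_tendsto_compose[OF hc])
    then have "(\<lambda>j. ennreal (h (y - 2 * d j))) \<longlonglongrightarrow> ennreal (h y)" by (rule tendsto_ennrealI)
    then have "liminf (\<lambda>j. ennreal (h (y - 2 * d j))) = ennreal (h y)"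
      by (intro lim_imp_Liminf) auto
    then show ?thesis using Liminf_mono[OF ev] by simp
  qed
  have "(\<integral>\<^sup>+x. ennreal (h (g x)) \<partial>M) \<le> (\<integral>\<^sup>+x. liminf (\<lambda>j. ennreal (\<phi> j (g x))) \<partial>M)"
    by (intro nn_integral_mono step2)
  also have "\<dots> \<le> liminf (\<lambda>j. \<integral>\<^sup>+x. ennreal (\<phi> j (g x)) \<partial>M)"
    by (intro nn_integral_liminf measM phim)
  also have "\<dots> \<le> liminf (\<lambda>j. \<integral>\<^sup>+x. ennreal (\<phi> j (g x)) \<partial>N)"
    by (intro Liminf_mono) (simp add: step1)
  also have "\<dots> \<le> liminf (\<lambda>j. \<integral>\<^sup>+x. ennreal (h (g x)) \<partial>N)"
    by (intro Liminf_mono always_eventually allI nn_integral_mono ennreal_leI) (simp add: \<phi>_def G.phi_le)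
  also have "\<dots> = (\<integral>\<^sup>+x. ennreal (h (g x)) \<partial>N)" by (simp add: Liminf_const)
  finally show ?thesis .
qed

lemma mono_pos_part:
  fixes h0 :: "real \<Rightarrow> real"
  assumes cvx: "convex_on UNIV h0" and nn: "\<And>x. 0 \<le> h0 x" and z: "h0 0 = 0"
  assumes ab: "0 \<le> a" "a \<le> b"
  shows "h0 a \<le> h0 b"
proof (cases "a = 0 \<or> a = b")
  case True then show ?thesis using z nn by auto
next
  case False
  then have ab': "0 < a" "a < b" using ab by auto
  have "h0 a \<le> ((b - a) * h0 0 + (a - 0) * h0 b) / (b - 0)"
    using convex_between[OF cvx ab'] by simp
  also have "\<dots> = (a / b) * h0 b" using z by simp
  also have "\<dots> \<le> 1 * h0 b" using ab' nn[of b] by (intro mult_right_mono) auto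
  finally show ?thesis by simp
qed

lemma Rpart:
  fixes h0 :: "real \<Rightarrow> real"
  assumes cvx: "convex_on UNIV h0" and nn: "\<And>x. 0 \<le> h0 x" and z: "h0 0 = 0"
  shows "convex_on UNIV (\<lambda>y. h0 (max y 0))" "mono (\<lambda>y. h0 (max y 0))"
    "\<And>y. y \<le> 0 \<Longrightarrow> h0 (max y 0) = 0"
proof -
  note mp = mono_pos_part[OF cvx nn z]
  show "mono (\<lambda>y. h0 (max y 0))" by (rule monoI) (intro mp, auto)
  show "\<And>y. y \<le> 0 \<Longrightarrow> h0 (max y 0) = 0" using z by simp
  show "convex_on UNIV (\<lambda>y. h0 (max y 0))"
  proof (rule convex_onI)
    fix t x y :: real assume t: "0 < t" "t < 1"
    have "h0 (max ((1 - t) *\<^sub>R x + t *\<^sub>R y) 0) \<le> h0 ((1 - t) *\<^sub>R max x 0 + t *\<^sub>R max y 0)"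
    proof (rule mp)
      show "0 \<le> max ((1 - t) *\<^sub>R x + t *\<^sub>R y) 0" by simp
      have "(1 - t) * x \<le> (1 - t) * max x 0" "t * y \<le> t * max y 0"
        using t by (auto intro: mult_left_mono)
      moreover have "0 \<le> (1 - t) * max x 0 + t * max y 0" using t by simp
      ultimately show "max ((1 - t) *\<^sub>R x + t *\<^sub>R y) 0 \<le> (1 - t) *\<^sub>R max x 0 + t *\<^sub>R max y 0"
        by simp
    qed
    also have "\<dots> \<le> (1 - t) * h0 (max x 0) + t * h0 (max y 0)"
      using t by (intro convex_onD[OF cvx]) auto
    finally show "h0 (max ((1 - t) *\<^sub>R x + t *\<^sub>R y) 0) \<le> (1 - t) * h0 (max x 0) + t * h0 (max y 0)" .
  qed auto
qed

lemma convex_reflect: "convex_on UNIV h0 \<Longrightarrow> convex_on UNIV (\<lambda>y::real. h0 (- y))"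
proof (rule convex_onI)
  fix t x y :: real assume c: "convex_on UNIV h0" and t: "0 < t" "t < 1"
  have "h0 (- ((1 - t) *\<^sub>R x + t *\<^sub>R y)) = h0 ((1 - t) *\<^sub>R (- x) + t *\<^sub>R (- y))" by (simp add: algebra_simps)
  also have "\<dots> \<le> (1 - t) * h0 (- x) + t * h0 (- y)" using t by (intro convex_onD[OF c]) auto
  finally show "h0 (- ((1 - t) *\<^sub>R x + t *\<^sub>R y)) \<le> (1 - t) * h0 (- x) + t * h0 (- y)" .
qed auto

lemma ext_decomp:
  assumes M: "fin_meas1 M" and hn: "\<And>x. 0 \<le> h x" and hm: "h \<in> borel_measurable borel"
    and f: "\<And>x. f x = h x + (a * x + c)"
  shows "(\<integral>\<^sup>+x. ennreal (h x) \<partial>M) < \<infinity> \<Longrightarrow>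
           ext_int M f = ereal (enn2real (\<integral>\<^sup>+x. ennreal (h x) \<partial>M) + (a * bary M + c * measure M UNIV))"
    and "(\<integral>\<^sup>+x. ennreal (h x) \<partial>M) = \<infinity> \<Longrightarrow> ext_int M f = \<infinity>"
proof -
  have hmM: "h \<in> borel_measurable M" using hm by (rule fm_meas[OF M])
  have Aint: "integrable M (\<lambda>x. a * x + c)" by (rule fm_int_affine[OF M])
  have Aval: "(\<integral>x. a * x + c \<partial>M) = a * bary M + c * measure M UNIV"
    using fm_int_id[OF M] fm_int_const[OF M, of c] fm_space[OF M] by (simp add: bary_def)
  {
    assume fin: "(\<integral>\<^sup>+x. ennreal (h x) \<partial>M) < \<infinity>"
    have hint: "integrable M h" using fin hmM hn by (intro integrableI_bounded) auto
    have fint: "integrable M f" unfolding f[abs_def] using hint Aint by (rule Bochner_Integration.integrable_add)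
    have "ext_int M f = ereal (integral\<^sup>L M f)" by (rule ext_int_integrable[OF fint])
    also have "integral\<^sup>L M f = integral\<^sup>L M h + (\<integral>x. a * x + c \<partial>M)"
      unfolding f[abs_def] using hint Aint by (rule Bochner_Integration.integral_add)
    also have "integral\<^sup>L M h = enn2real (\<integral>\<^sup>+x. ennreal (h x) \<partial>M)"
      using hmM hn by (simp add: integral_eq_nn_integral)
    finally show "ext_int M f = ereal (enn2real (\<integral>\<^sup>+x. ennreal (h x) \<partial>M) + (a * bary M + c * measure M UNIV))"
      using Aval by simp
  }
  {
    assume inf: "(\<integral>\<^sup>+x. ennreal (h x) \<partial>M) = \<infinity>"
    have Afin: "(\<integral>\<^sup>+x. ennreal (norm (a * x + c)) \<partial>M) < \<infinity>"
      using Aint by (simp add: integrable_iff_bounded)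
    have "(\<integral>\<^sup>+x. ennreal (h x) \<partial>M) \<le> (\<integral>\<^sup>+x. ennreal (f x) + ennreal (norm (a * x + c)) \<partial>M)"
    proof (intro nn_integral_mono)
      fix x
      have "h x \<le> max (f x) 0 + norm (a * x + c)" using f[of x] by auto
      then have "ennreal (h x) \<le> ennreal (max (f x) 0 + norm (a * x + c))" by (rule ennreal_leI)
      also have "\<dots> = ennreal (max (f x) 0) + ennreal (norm (a * x + c))" by (rule ennreal_plus) auto
      also have "ennreal (max (f x) 0) = ennreal (f x)" by (simp add: max_def ennreal_neg)
      finally show "ennreal (h x) \<le> ennreal (f x) + ennreal (norm (a * x + c))" .
    qed
    also have "\<dots> = (\<integral>\<^sup>+x. ennreal (f x) \<partial>M) + (\<integral>\<^sup>+x. ennreal (norm (a * x + c)) \<partial>M)"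
    proof (rule nn_integral_add)
      have "f \<in> borel_measurable borel" unfolding f[abs_def] using hm by measurable
      then show "(\<lambda>x. ennreal (f x)) \<in> borel_measurable M" by (intro fm_meas[OF M]) measurable
      show "(\<lambda>x. ennreal (norm (a * x + c))) \<in> borel_measurable M" by (intro fm_meas[OF M]) measurable
    qed
    finally have "(\<integral>\<^sup>+x. ennreal (f x) \<partial>M) + (\<integral>\<^sup>+x. ennreal (norm (a * x + c)) \<partial>M) = \<infinity>"
      using inf by (simp add: top_unique)
    then have Pinf: "(\<integral>\<^sup>+x. ennreal (f x) \<partial>M) = \<infinity>"
      using Afin unfolding ennreal_add_eq_top by auto
    have "(\<integral>\<^sup>+x. ennreal (- f x) \<partial>M) \<le> (\<integral>\<^sup>+x. ennreal (norm (a * x + c)) \<partial>M)"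
    proof (intro nn_integral_mono ennreal_leI)
      fix x show "- f x \<le> norm (a * x + c)" using f[of x] hn[of x] by auto
    qed
    then have Nfin: "(\<integral>\<^sup>+x. ennreal (- f x) \<partial>M) < \<infinity>" using Afin by (rule le_less_trans)
    show "ext_int M f = \<infinity>"
      unfolding ext_int_def Pinf using Nfin enn2ereal_fin[OF Nfin] by simp
  }
qed

lemma cx_from_put:
  assumes M: "fin_meas1 M" and N: "fin_meas1 N"
    and mass: "measure M UNIV = measure N UNIV" and mean: "bary M = bary N"
    and pp: "\<And>k. putf M k \<le> putf N k"
  shows "cx_le M N"
  unfolding cx_le_def
proof (intro allI impI)
  fix f :: "real \<Rightarrow> real" assume cf: "convex_on UNIV f"
  have cc: "callf M k \<le> callf N k" for k
    using parity[OF M, of k] parity[OF N, of k] pp[of k] mass mean by simp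
  define s where "s = Sup ((\<lambda>y. (f 0 - f y) / (- y)) ` {..<0})"
  have slope: "(f 0 - f y) / (- y) \<le> (f x - f 0) / x" if "y < 0" "0 < x" for x y
  proof -
    have "f 0 \<le> ((x - 0) * f y + (0 - y) * f x) / (x - y)"
      using convex_between[OF cf that(1) that(2)] .
    then have "f 0 * (x - y) \<le> x * f y + (- y) * f x" using that by (simp add: field_simps)
    then have "x * (f 0 - f y) \<le> (- y) * (f x - f 0)" by (simp add: algebra_simps)
    then show ?thesis using that by (simp add: field_simps)
  qed
  have ne: "(\<lambda>y. (f 0 - f y) / (- y)) ` {..<0} \<noteq> {}" by auto
  have bdd: "bdd_above ((\<lambda>y. (f 0 - f y) / (- y)) ` {..<0})"
    using slope[of _ 1] by (intro bdd_aboveI2[where M="(f 1 - f 0) / 1"]) auto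
  have sub: "f 0 + s * x \<le> f x" for x
  proof (cases x "0::real" rule: linorder_cases)
    case less
    have "(f 0 - f x) / (- x) \<le> s" unfolding s_def using less bdd by (intro cSup_upper) auto
    then have "f 0 - f x \<le> s * (- x)" using less by (simp add: field_simps)
    then show ?thesis by simp
  next
    case greater
    have "s \<le> (f x - f 0) / x" unfolding s_def
    proof (rule cSup_least[OF ne])
      fix v assume "v \<in> (\<lambda>y. (f 0 - f y) / (- y)) ` {..<0}"
      then obtain y where "y < 0" "v = (f 0 - f y) / (- y)" by auto
      then show "v \<le> (f x - f 0) / x" using slope[of y x] greater by simp
    qed
    then have "s * x \<le> f x - f 0" using greater by (simp add: field_simps)
    then show ?thesis by simp
  qed simp
  define h where "h x = f x - (f 0 + s * x)" for x
  have hn: "0 \<le> h x" for x using sub[of x] by (simp add: h_def)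
  have h0: "h 0 = 0" by (simp add: h_def)
  have hc: "convex_on UNIV h"
  proof -
    have "convex_on UNIV (\<lambda>x. f x + ((- s) * x + (- f 0)))"
      by (intro convex_on_add cf convex_affine)
    then show ?thesis unfolding h_def by (simp add: algebra_simps)
  qed
  have hm: "h \<in> borel_measurable borel"
    using convex_on_continuous[OF open_UNIV hc] by (rule borel_measurable_continuous_onI)
  define hR where "hR y = h (max y 0)" for y
  define hL where "hL y = h (- max y 0)" for y
  have hLc: "convex_on UNIV (\<lambda>y. h (- y))" by (rule convex_reflect[OF hc])
  note R1 = Rpart[OF hc hn h0]
  note R2 = Rpart[OF hLc hn, simplified, OF h0]
  have split: "h x = hR x + hL (- x)" for x
    by (cases "0 \<le> x") (auto simp: hR_def hL_def h0 max_def)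
  have hRm: "hR \<in> borel_measurable borel" unfolding hR_def using hm by measurable
  have hLm: "hL \<in> borel_measurable borel" unfolding hL_def using hm by measurable
  have int_split: "(\<integral>\<^sup>+x. ennreal (h x) \<partial>L) = (\<integral>\<^sup>+x. ennreal (hR x) \<partial>L) + (\<integral>\<^sup>+x. ennreal (hL (- x)) \<partial>L)"
    if L: "fin_meas1 L" for L
  proof -
    have "(\<integral>\<^sup>+x. ennreal (h x) \<partial>L) = (\<integral>\<^sup>+x. ennreal (hR x) + ennreal (hL (- x)) \<partial>L)"
    proof (intro nn_integral_cong)
      fix x
      have "0 \<le> hR x" "0 \<le> hL (- x)" unfolding hR_def hL_def by (rule hn)+
      then show "ennreal (h x) = ennreal (hR x) + ennreal (hL (- x))"
        unfolding split[of x] by (rule ennreal_plus)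
    qed
    also have "\<dots> = (\<integral>\<^sup>+x. ennreal (hR x) \<partial>L) + (\<integral>\<^sup>+x. ennreal (hL (- x)) \<partial>L)"
    proof (rule nn_integral_add)
      note hRm[measurable] hLm[measurable]
      show "(\<lambda>x. ennreal (hR x)) \<in> borel_measurable L" by (rule fm_meas[OF L]) measurable
      show "(\<lambda>x. ennreal (hL (- x))) \<in> borel_measurable L" by (rule fm_meas[OF L]) measurable
    qed
    finally show ?thesis .
  qed
  have cR: "(\<integral>\<^sup>+x. ennreal (hR (id x)) \<partial>M) \<le> (\<integral>\<^sup>+x. ennreal (hR (id x)) \<partial>N)"
  proof (rule core[where g=id and h=hR and ?x0.0=0])
    show "sets M = sets borel" "sets N = sets borel" using M N by (simp_all add: fm_sets)
    show "id \<in> borel_measurable borel" by simp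
    show "(\<integral>\<^sup>+x. ennreal (max (id x - k) 0) \<partial>M) \<le> (\<integral>\<^sup>+x. ennreal (max (id x - k) 0) \<partial>N)" for k
      using nn_call[OF M, of k] nn_call[OF N, of k] cc[of k] by (simp add: ennreal_leI)
    show "convex_on UNIV hR" "mono hR" unfolding hR_def using R1 by auto
    show "\<And>x. x \<le> 0 \<Longrightarrow> hR x = 0" unfolding hR_def using R1 by auto
  qed
  have cL: "(\<integral>\<^sup>+x. ennreal (hL (uminus x)) \<partial>M) \<le> (\<integral>\<^sup>+x. ennreal (hL (uminus x)) \<partial>N)"
  proof (rule core[where g=uminus and h=hL and ?x0.0=0])
    show "sets M = sets borel" "sets N = sets borel" using M N by (simp_all add: fm_sets)
    have "(\<lambda>x::real. - x) \<in> borel_measurable borel" by measurable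
    then show "(uminus :: real \<Rightarrow> real) \<in> borel_measurable borel" .
    show "(\<integral>\<^sup>+x. ennreal (max (- x - k) 0) \<partial>M) \<le> (\<integral>\<^sup>+x. ennreal (max (- x - k) 0) \<partial>N)" for k
    proof -
      have e0: "- x - k = - k - x" for x :: real by simp
      have e: "(\<lambda>x. ennreal (max (- x - k) 0)) = (\<lambda>x. ennreal (max (- k - x) 0))"
        unfolding e0 ..
      show ?thesis unfolding e nn_put[OF M] nn_put[OF N] using pp[of "- k"] by (simp add: ennreal_leI)
    qed
    show "convex_on UNIV hL" "mono hL" unfolding hL_def using R2 by auto
    show "\<And>x. x \<le> 0 \<Longrightarrow> hL x = 0" unfolding hL_def using R2 by auto
  qed
  have HMN: "(\<integral>\<^sup>+x. ennreal (h x) \<partial>M) \<le> (\<integral>\<^sup>+x. ennreal (h x) \<partial>N)"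
    unfolding int_split[OF M] int_split[OF N] using cR cL by (intro add_mono) simp_all
  have fdec: "f x = h x + (s * x + f 0)" for x by (simp add: h_def)
  note dM = ext_decomp[OF M hn hm fdec] and dN = ext_decomp[OF N hn hm fdec]
  show "ext_int M f \<le> ext_int N f"
  proof (cases "(\<integral>\<^sup>+x. ennreal (h x) \<partial>N) = \<infinity>")
    case True then show ?thesis using dN(2) by simp
  next
    case False
    then have fN: "(\<integral>\<^sup>+x. ennreal (h x) \<partial>N) < \<infinity>" by (simp add: less_top)
    then have fM: "(\<integral>\<^sup>+x. ennreal (h x) \<partial>M) < \<infinity>" using HMN by (rule le_less_trans[rotated])
    have "enn2real (\<integral>\<^sup>+x. ennreal (h x) \<partial>M) \<le> enn2real (\<integral>\<^sup>+x. ennreal (h x) \<partial>N)"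
      using HMN fN by (intro enn2real_mono) (auto simp: less_top)
    then show ?thesis unfolding dM(1)[OF fM] dN(1)[OF fN] mass mean by simp
  qed
qed

lemma put_below_Ptilde:
  assumes \<nu>: "fin_meas1 \<nu>" and L: "fin_meas1 L"
    and mass: "measure L UNIV = measure \<mu> UNIV" and mean: "bary L = bary \<mu>"
    and p: "\<And>k. putf L k \<le> putf \<nu> k" and c: "\<And>k. callf L k \<le> callf \<nu> k"
  shows "putf L k \<le> Ptilde \<nu> \<mu> k"
  unfolding Ptilde_def using p[of k] c[of k] parity[OF L, of k] mass mean by simp

lemma main_generic:
  assumes \<mu>: "fin_meas1 \<mu>" and \<nu>: "fin_meas1 \<nu>" and E: "E_le \<mu> \<nu>"
    and \<eta>: "fin_meas1 \<eta>" and le: "meas_le \<eta> \<nu>"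
    and mass: "measure \<eta> UNIV = measure \<mu> UNIV" and mean: "bary \<eta> = bary \<mu>"
    and below: "\<And>k. putf \<eta> k \<le> Ptilde \<nu> \<mu> k"
    and above: "\<And>\<psi> k. convex_on UNIV \<psi> \<Longrightarrow> (\<forall>y. \<psi> y \<le> Ptilde \<nu> \<mu> y) \<Longrightarrow> \<psi> k \<le> putf \<eta> k"
  shows "putf (counter_shadow \<nu> \<mu>) = convex_env (Ptilde \<nu> \<mu>)
    \<and> (\<forall>a b. a \<le> b \<longrightarrow> (\<exists>da db.
          ((\<lambda>y. (convex_env (Ptilde \<nu> \<mu>) y - convex_env (Ptilde \<nu> \<mu>) a) / (y - a)) \<longlongrightarrow> da) (at_right a)
        \<and> ((\<lambda>y. (convex_env (Ptilde \<nu> \<mu>) y - convex_env (Ptilde \<nu> \<mu>) b) / (y - b)) \<longlongrightarrow> db) (at_right b)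
        \<and> measure (counter_shadow \<nu> \<mu>) {a<..b} = db - da))"
proof -
  have env: "convex_env (Ptilde \<nu> \<mu>) = putf \<eta>"
  proof
    fix x
    show "convex_env (Ptilde \<nu> \<mu>) x = putf \<eta> x"
      unfolding convex_env_def
    proof (rule cSup_eq_maximum)
      show "putf \<eta> x \<in> {g x |g. convex_on UNIV g \<and> (\<forall>y. g y \<le> Ptilde \<nu> \<mu> y)}"
        using put_convex[OF \<eta>] below by blast
      fix v assume "v \<in> {g x |g. convex_on UNIV g \<and> (\<forall>y. g y \<le> Ptilde \<nu> \<mu> y)}"
      then show "v \<le> putf \<eta> x" using above by blast
    qed
  qed
  have cx_of: "cx_le \<eta>' \<eta> \<and> fin_meas1 \<eta>'"
    if s: "sets \<eta>' = sets borel" and c: "cx_le \<mu> \<eta>'" and l: "meas_le \<eta>' \<nu>" for \<eta>'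
  proof -
    have f: "fin_meas1 \<eta>'" using meas_le_imp(2)[OF \<nu> s l] .
    note mb = cx_mass_bary[OF \<mu> f c]
    have "putf \<eta>' k \<le> Ptilde \<nu> \<mu> k" for k
      using mb by (intro put_below_Ptilde[OF \<nu> f] le_put[OF \<nu> s l]) auto
    then have "putf \<eta>' k \<le> putf \<eta> k" for k
      using put_convex[OF f] by (intro above) auto
    then show ?thesis using f mb mass mean by (intro conjI cx_from_put[OF f \<eta>]) auto
  qed
  let ?P = "\<lambda>\<eta>. sets \<eta> = sets borel \<and> cx_le \<mu> \<eta> \<and> meas_le \<eta> \<nu> \<and>
      (\<forall>\<eta>'. sets \<eta>' = sets borel \<longrightarrow> cx_le \<mu> \<eta>' \<longrightarrow> meas_le \<eta>' \<nu> \<longrightarrow> cx_le \<eta>' \<eta>)"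
  have P\<eta>: "?P \<eta>"
  proof (intro conjI allI impI)
    show "sets \<eta> = sets borel" using fm_sets[OF \<eta>] .
    show "meas_le \<eta> \<nu>" by (rule le)
    show "cx_le \<mu> \<eta>"
    proof (rule cx_from_put[OF \<mu> \<eta>])
      show "measure \<mu> UNIV = measure \<eta> UNIV" "bary \<mu> = bary \<eta>" using mass mean by simp_all
      fix k
      have "putf \<mu> k \<le> Ptilde \<nu> \<mu> k" for k
        using E_le_put[OF \<mu> \<nu> E] E_le_call[OF \<mu> \<nu> E] by (intro put_below_Ptilde[OF \<nu> \<mu>]) auto
      then show "putf \<mu> k \<le> putf \<eta> k" using put_convex[OF \<mu>] by (intro above) auto
    qed
    fix \<eta>' assume "sets \<eta>' = sets borel" "cx_le \<mu> \<eta>'" "meas_le \<eta>' \<nu>"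
    then show "cx_le \<eta>' \<eta>" using cx_of by blast
  qed
  have uniq: "\<eta>2 = \<eta>" if P2: "?P \<eta>2" for \<eta>2
  proof -
    have c21: "cx_le \<eta>2 \<eta>" and f2: "fin_meas1 \<eta>2" using cx_of P2 by blast+
    have c12: "cx_le \<eta> \<eta>2" using P2 P\<eta> by blast
    have "putf \<eta>2 k = putf \<eta> k" for k
    proof -
      have "ext_int \<eta>2 (\<lambda>x. max (k - x) 0) \<le> ext_int \<eta> (\<lambda>x. max (k - x) 0)"
           "ext_int \<eta> (\<lambda>x. max (k - x) 0) \<le> ext_int \<eta>2 (\<lambda>x. max (k - x) 0)"
        using c21 c12 convex_put_fun[of k] unfolding cx_le_def by blast+
      then show ?thesis
        unfolding ext_int_integrable[OF fm_int_put[OF f2]] ext_int_integrable[OF fm_int_put[OF \<eta>]]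
        by (simp add: putf_def)
    qed
    moreover have "measure \<eta>2 UNIV = measure \<eta> UNIV" using cx_mass_bary[OF f2 \<eta> c21] by simp
    ultimately show ?thesis using meas_eq_put[OF f2 \<eta>] by simp
  qed
  have cs: "counter_shadow \<nu> \<mu> = \<eta>"
    unfolding counter_shadow_def
  proof (rule the_equality)
    show "?P \<eta>" by (rule P\<eta>)
    fix x assume "?P x" then show "x = \<eta>" by (rule uniq)
  qed
  show ?thesis
    unfolding cs env
  proof (intro conjI allI impI exI)
    show "putf \<eta> = putf \<eta>" ..
    fix a b :: real assume ab: "a \<le> b"
    show "((\<lambda>y. (putf \<eta> y - putf \<eta> a) / (y - a)) \<longlongrightarrow> measure \<eta> {..a}) (at_right a)"
      by (rule put_rderiv[OF \<eta>])
    show "((\<lambda>y. (putf \<eta> y - putf \<eta> b) / (y - b)) \<longlongrightarrow> measure \<eta> {..b}) (at_right b)"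
      by (rule put_rderiv[OF \<eta>])
    have "{a<..b} = {..b} - {..a}" by auto
    then show "measure \<eta> {a<..b} = measure \<eta> {..b} - measure \<eta> {..a}"
      using finite_measure.finite_measure_Diff[OF fm_finite[OF \<eta>], of "{..b}" "{..a}"] fm_sets[OF \<eta>] ab
      by simp
  qed
qed

locale qs =
  fixes \<nu> :: "real measure"
  assumes nu: "fin_meas1 \<nu>" and npos: "0 < measure \<nu> UNIV"
begin

definition "nn = measure \<nu> UNIV"
definition "\<nu>1 = density \<nu> (\<lambda>_. ennreal (1 / nn))"
definition "\<Omega> = restrict_space lborel {0<..<1::real}"
definition "Q \<omega> = Inf {x. \<omega> \<le> cdf \<nu>1 x}"
definition "\<eta>S S = distr (density \<Omega> (\<lambda>r. ennreal (nn * indicator S r))) borel Q"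

lemma nn_pos: "0 < nn" using npos by (simp add: nn_def)

lemma space_\<Omega>: "space \<Omega> = {0<..<1}" by (simp add: \<Omega>_def)
lemma sets_\<Omega>: "sets \<Omega> = sets (restrict_space borel {0<..<1::real})"
  by (simp add: \<Omega>_def sets_restrict_space)

lemma rd: "real_distribution \<nu>1"
proof -
  have s: "sets \<nu>1 = sets borel" using fm_sets[OF nu] by (simp add: \<nu>1_def)
  have "emeasure \<nu>1 (space \<nu>1) = ennreal (1 / nn) * emeasure \<nu> (space \<nu>)"
    by (simp add: \<nu>1_def emeasure_density_const)
  also have "emeasure \<nu> (space \<nu>) = ennreal nn"
    using fm_finite[OF nu] fm_space[OF nu] by (simp add: nn_def finite_measure.emeasure_eq_measure)
  also have "ennreal (1 / nn) * ennreal nn = 1"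
    using nn_pos by (simp add: ennreal_mult[symmetric])
  finally have "prob_space \<nu>1" by (rule prob_spaceI)
  then show ?thesis using s by (simp add: real_distribution_def real_distribution_axioms_def)
qed

lemma cdfd: "cdf_distribution \<nu>1" using rd by (simp add: cdf_distribution_def)

lemma Q_mono: "mono_on {0<..<1} Q"
proof -
  interpret C: cdf_distribution \<nu>1 by (rule cdfd)
  show ?thesis using C.mono_I unfolding Q_def .
qed

lemma Q_le: "0 < r \<Longrightarrow> r \<le> r' \<Longrightarrow> r' < 1 \<Longrightarrow> Q r \<le> Q r'"
  using Q_mono by (auto simp: mono_on_def)

lemma Q_meas: "Q \<in> borel_measurable \<Omega>"
proof -
  interpret C: cdf_distribution \<nu>1 by (rule cdfd)
  show ?thesis using C.measurable_CI unfolding Q_def measurable_cong_sets[OF sets_\<Omega> refl] .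
qed

lemma distr_Q: "distr \<Omega> borel Q = \<nu>1"
proof -
  interpret C: cdf_distribution \<nu>1 by (rule cdfd)
  show ?thesis using C.distr_I_eq_M unfolding Q_def \<Omega>_def .
qed

lemma nu_rep: "\<nu> = distr (density \<Omega> (\<lambda>_. ennreal nn)) borel Q"
proof -
  have "\<nu> = density \<nu> (\<lambda>x. ennreal (1 / nn) * ennreal nn)"
    using nn_pos by (simp add: ennreal_mult[symmetric] density_1)
  also have "\<dots> = density \<nu>1 (\<lambda>_. ennreal nn)"
    unfolding \<nu>1_def by (subst density_density_eq) (auto simp: fm_meas[OF nu])
  also have "\<dots> = distr (density \<Omega> (\<lambda>_. ennreal nn)) borel Q"
    unfolding distr_Q[symmetric] by (subst density_distr) (auto simp: Q_meas)
  finally show ?thesis .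
qed

lemma ind_meas: "S \<in> sets borel \<Longrightarrow> (indicator S :: real \<Rightarrow> real) \<in> borel_measurable \<Omega>"
  unfolding measurable_cong_sets[OF sets_\<Omega> refl]
  by (intro measurable_restrict_space1 borel_measurable_indicator) simp

lemma nu_rep2: "\<nu> = \<eta>S UNIV" unfolding \<eta>S_def using nu_rep by simp

lemma \<eta>S_sets: "sets (\<eta>S S) = sets borel" by (simp add: \<eta>S_def)

lemma Q_meas_dens: "Q \<in> density \<Omega> g \<rightarrow>\<^sub>M borel"
  using Q_meas by (simp add: measurable_cong_sets[OF sets_density refl])

lemma \<eta>S_int:
  assumes f: "f \<in> borel_measurable borel" and S: "S \<in> sets borel"
  shows "integral\<^sup>L (\<eta>S S) f = (\<integral>r. nn * indicator S r * f (Q r) \<partial>\<Omega>)"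
proof -
  have "integral\<^sup>L (\<eta>S S) f = (\<integral>r. f (Q r) \<partial>density \<Omega> (\<lambda>r. ennreal (nn * indicator S r)))"
    unfolding \<eta>S_def by (rule integral_distr[OF Q_meas_dens f])
  also have "\<dots> = (\<integral>r. (nn * indicator S r) *\<^sub>R f (Q r) \<partial>\<Omega>)"
  proof (rule integral_density)
    show "(\<lambda>r. f (Q r)) \<in> borel_measurable \<Omega>" using Q_meas f by measurable
    have [measurable]: "(indicator S :: real \<Rightarrow> real) \<in> borel_measurable \<Omega>" using S by (rule ind_meas)
    show "(\<lambda>r. nn * indicator S r) \<in> borel_measurable \<Omega>" by measurable
    show "AE x in \<Omega>. 0 \<le> nn * indicator S x" using nn_pos by simp
  qed
  finally show ?thesis by simp
qed

lemma \<eta>S_le: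
  assumes S: "S \<in> sets borel"
  shows "meas_le (\<eta>S S) \<nu>"
  unfolding meas_le_def
proof
  fix A :: "real set" assume A: "A \<in> sets borel"
  have [measurable]: "(indicator S :: real \<Rightarrow> real) \<in> borel_measurable \<Omega>" using S by (rule ind_meas)
  have dm: "(\<lambda>r. ennreal (nn * indicator S r)) \<in> borel_measurable \<Omega>" by measurable
  have pre: "Q -` A \<inter> space \<Omega> \<in> sets \<Omega>" using Q_meas A by (rule measurable_sets)
  have "emeasure (\<eta>S S) A = (\<integral>\<^sup>+r\<in>Q -` A \<inter> space \<Omega>. ennreal (nn * indicator S r) \<partial>\<Omega>)"
    unfolding \<eta>S_def using A Q_meas_dens pre
    by (simp add: emeasure_distr emeasure_density[OF dm] space_density)
  also have "\<dots> \<le> (\<integral>\<^sup>+r\<in>Q -` A \<inter> space \<Omega>. ennreal nn \<partial>\<Omega>)"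
    using nn_pos by (intro nn_integral_mono) (auto simp: indicator_def)
  also have "\<dots> = emeasure (density \<Omega> (\<lambda>_. ennreal nn)) (Q -` A \<inter> space \<Omega>)"
    by (rule emeasure_density[symmetric]) (simp_all add: pre)
  also have "\<dots> = emeasure (distr (density \<Omega> (\<lambda>_. ennreal nn)) borel Q) A"
    by (subst emeasure_distr[OF Q_meas_dens A]) (simp add: space_density)
  also have "\<dots> = emeasure \<nu> A" by (simp only: nu_rep[symmetric])
  finally show "emeasure (\<eta>S S) A \<le> emeasure \<nu> A" .
qed

lemma \<eta>S_fm: "S \<in> sets borel \<Longrightarrow> fin_meas1 (\<eta>S S)"
  using meas_le_imp(2)[OF nu \<eta>S_sets \<eta>S_le] by blast

lemma fin_\<Omega>: "finite_measure \<Omega>"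
  unfolding \<Omega>_def
  by (rule finite_measureI) (simp add: space_restrict_space emeasure_restrict_space)

lemma Q_int: "integrable \<Omega> Q"
proof -
  have "integrable (\<eta>S UNIV) (\<lambda>x. x)" using fm_int_id[OF nu] nu_rep2 by simp
  then have "integrable (density \<Omega> (\<lambda>r. ennreal (nn * indicator UNIV r))) (\<lambda>r. Q r)"
    unfolding \<eta>S_def integrable_distr_eq[OF Q_meas_dens measurable_ident_sets[OF refl]] .
  then have "integrable \<Omega> (\<lambda>r. (nn * indicator UNIV r) *\<^sub>R Q r)"
  proof (subst (asm) integrable_density)
    show "Q \<in> borel_measurable \<Omega>" by (rule Q_meas)
    show "(\<lambda>r. nn * indicator UNIV r) \<in> borel_measurable \<Omega>" by simp
    show "AE x in \<Omega>. 0 \<le> nn * indicator UNIV x" using nn_pos by simp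
  qed
  then have "integrable \<Omega> (\<lambda>r. nn * Q r)" by simp
  then have "integrable \<Omega> (\<lambda>r. (1 / nn) * (nn * Q r))" by (rule Bochner_Integration.integrable_mult_right)
  then show ?thesis using nn_pos by simp
qed

lemma int_ind_\<Omega>: "S \<in> sets borel \<Longrightarrow> integrable \<Omega> (\<lambda>r. c * indicator S r :: real)"
proof -
  assume S: "S \<in> sets borel"
  have [measurable]: "(indicator S :: real \<Rightarrow> real) \<in> borel_measurable \<Omega>" using S by (rule ind_meas)
  have "integrable \<Omega> (\<lambda>r. c :: real)" using fin_\<Omega> by (rule finite_measure.integrable_const)
  then show ?thesis
  proof (rule Bochner_Integration.integrable_bound)
    show "(\<lambda>r. c * indicator S r) \<in> borel_measurable \<Omega>" by measurable
    show "AE x in \<Omega>. norm (c * indicator S x) \<le> norm c"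
      by (intro AE_I2) (simp add: indicator_def abs_mult)
  qed
qed

end

lemma put_lower: "fin_meas1 M \<Longrightarrow> measure M UNIV * k - bary M \<le> putf M k"
proof -
  assume M: "fin_meas1 M"
  have "(\<integral>x. k - x \<partial>M) \<le> putf M k"
    unfolding putf_def using fm_int_put[OF M] fm_int_const[OF M, of k] fm_int_id[OF M]
    by (intro integral_mono) auto
  then show ?thesis using fm_int_const[OF M, of k] fm_int_id[OF M] fm_space[OF M]
    by (simp add: Bochner_Integration.integral_diff bary_def)
qed

lemma call_lower: "fin_meas1 M \<Longrightarrow> bary M - measure M UNIV * k \<le> callf M k"
proof -
  assume M: "fin_meas1 M"
  have "(\<integral>x. x - k \<partial>M) \<le> callf M k"
    unfolding callf_def using fm_int_call[OF M] fm_int_const[OF M, of k] fm_int_id[OF M]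
    by (intro integral_mono) auto
  then show ?thesis using fm_int_const[OF M, of k] fm_int_id[OF M] fm_space[OF M]
    by (simp add: Bochner_Integration.integral_diff bary_def)
qed

context qs
begin

lemma int_Q_ind: "S \<in> sets borel \<Longrightarrow> integrable \<Omega> (\<lambda>r. c * indicator S r * Q r)"
proof -
  assume S: "S \<in> sets borel"
  have [measurable]: "(indicator S :: real \<Rightarrow> real) \<in> borel_measurable \<Omega>" using S by (rule ind_meas)
  have [measurable]: "Q \<in> borel_measurable \<Omega>" by (rule Q_meas)
  have "integrable \<Omega> (\<lambda>r. c * Q r)" using Q_int by (rule Bochner_Integration.integrable_mult_right)
  then show ?thesis
  proof (rule Bochner_Integration.integrable_bound)
    show "(\<lambda>r. c * indicator S r * Q r) \<in> borel_measurable \<Omega>" by measurable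
    show "AE x in \<Omega>. norm (c * indicator S x * Q x) \<le> norm (c * Q x)"
      by (intro AE_I2) (simp add: indicator_def abs_mult)
  qed
qed

lemma putS: "S \<in> sets borel \<Longrightarrow> putf (\<eta>S S) k = (\<integral>r. nn * indicator S r * max (k - Q r) 0 \<partial>\<Omega>)"
  unfolding putf_def by (rule \<eta>S_int) auto
lemma callS: "S \<in> sets borel \<Longrightarrow> callf (\<eta>S S) k = (\<integral>r. nn * indicator S r * max (Q r - k) 0 \<partial>\<Omega>)"
  unfolding callf_def by (rule \<eta>S_int) auto
lemma baryS: "S \<in> sets borel \<Longrightarrow> bary (\<eta>S S) = (\<integral>r. nn * indicator S r * Q r \<partial>\<Omega>)"
  unfolding bary_def by (rule \<eta>S_int) auto
lemma massS: "S \<in> sets borel \<Longrightarrow> measure (\<eta>S S) UNIV = (\<integral>r. nn * indicator S r \<partial>\<Omega>)"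
proof -
  assume S: "S \<in> sets borel"
  have "measure (\<eta>S S) UNIV = (\<integral>x. 1 \<partial>\<eta>S S)"
    using fm_space[OF \<eta>S_fm[OF S]] by simp
  also have "\<dots> = (\<integral>r. nn * indicator S r * 1 \<partial>\<Omega>)" by (rule \<eta>S_int[OF _ S]) simp
  finally show ?thesis by simp
qed

lemma put_nu: "putf \<nu> k = (\<integral>r. nn * max (k - Q r) 0 \<partial>\<Omega>)"
  using putS[of UNIV k] nu_rep2 by simp
lemma call_nu: "callf \<nu> k = (\<integral>r. nn * max (Q r - k) 0 \<partial>\<Omega>)"
  using callS[of UNIV k] nu_rep2 by simp

lemma int_cong_\<Omega>: "(\<And>r. 0 < r \<Longrightarrow> r < 1 \<Longrightarrow> f r = g r) \<Longrightarrow> (\<integral>r. f r \<partial>\<Omega>) = (\<integral>r. g r \<partial>\<Omega>)"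
  by (rule Bochner_Integration.integral_cong) (auto simp: space_\<Omega>)

lemma int_ind_lt: "0 \<le> c \<Longrightarrow> c \<le> 1 \<Longrightarrow> (\<integral>r. indicator {..<c} r \<partial>\<Omega>) = c"
proof -
  assume c: "0 \<le> c" "c \<le> 1"
  have "(\<integral>r. indicator {..<c} r \<partial>\<Omega>) = measure \<Omega> ({..<c} \<inter> space \<Omega>)"
    by (rule Bochner_Integration.integral_indicator)
  also have "{..<c} \<inter> space \<Omega> = {0<..<c}" using c by (auto simp: space_\<Omega>)
  also have "measure \<Omega> {0<..<c} = measure lborel {0<..<c}"
    unfolding \<Omega>_def using c by (intro measure_restrict_space) auto
  also have "\<dots> = c" using c by simp
  finally show ?thesis .
qed

definition "G c = (\<integral>r. indicator {..<c} r * Q r \<partial>\<Omega>)"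

lemma G_cont: "continuous_on UNIV G"
proof -
  have "isCont G c" for c
  proof (rule continuous_at_sequentiallyI)
    fix u :: "nat \<Rightarrow> real" assume u: "u \<longlonglongrightarrow> c"
    have [measurable]: "Q \<in> borel_measurable \<Omega>" by (rule Q_meas)
    have m: "(\<lambda>r. indicator {..<t} r * Q r) \<in> borel_measurable \<Omega>" for t
    proof -
      have [measurable]: "(indicator {..<t} :: real \<Rightarrow> real) \<in> borel_measurable \<Omega>" by (rule ind_meas) simp
      show ?thesis by measurable
    qed
    show "(\<lambda>n. G (u n)) \<longlonglongrightarrow> G c"
      unfolding G_def
    proof (rule integral_dominated_convergence[where w="\<lambda>r. norm (Q r)"])
      show "integrable \<Omega> (\<lambda>r. norm (Q r))" using Q_int by simp
      show "(\<lambda>r. indicator {..<c} r * Q r) \<in> borel_measurable \<Omega>" by (rule m)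
      show "\<And>i. (\<lambda>r. indicator {..<u i} r * Q r) \<in> borel_measurable \<Omega>" by (rule m)
      show "\<And>i. AE r in \<Omega>. norm (indicator {..<u i} r * Q r) \<le> norm (Q r)"
        by (intro AE_I2) (simp add: indicator_def)
      have "AE r in \<Omega>. r \<noteq> c"
        unfolding \<Omega>_def
        by (subst AE_restrict_space_iff) (auto intro: eventually_mono[OF AE_lborel_singleton[of c]])
      then show "AE r in \<Omega>. (\<lambda>i. indicator {..<u i} r * Q r) \<longlonglongrightarrow> indicator {..<c} r * Q r"
      proof (rule AE_mp, intro AE_I2 impI)
        fix r assume "r \<noteq> c"
        then consider "r < c" | "c < r" by linarith
        then show "(\<lambda>i. indicator {..<u i} r * Q r) \<longlonglongrightarrow> indicator {..<c} r * Q r"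
        proof cases
          case 1
          then have "eventually (\<lambda>i. r < u i) sequentially" using order_tendstoD(1)[OF u] by simp
          then have "eventually (\<lambda>i. indicator {..<u i} r * Q r = indicator {..<c} r * Q r) sequentially"
            by eventually_elim (use 1 in simp)
          then show ?thesis by (rule tendsto_eventually)
        next
          case 2
          then have "eventually (\<lambda>i. u i < r) sequentially" using order_tendstoD(2)[OF u] by simp
          then have "eventually (\<lambda>i. indicator {..<u i} r * Q r = indicator {..<c} r * Q r) sequentially"
            by eventually_elim (use 2 in simp)
          then show ?thesis by (rule tendsto_eventually)
        qed
      qed
    qed
  qed
  then show ?thesis by (simp add: continuous_at_imp_continuous_on)
qed

end

lemma eps_left:
  fixes \<psi> :: "real \<Rightarrow> real"
  assumes cv: "convex_on UNIV \<psi>" and kq: "k < q" and q: "\<psi> q \<le> 0"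
    and ex: "\<And>e. 0 < e \<Longrightarrow> \<exists>y<k. \<psi> y \<le> e"
  shows "\<psi> k \<le> 0"
proof (rule field_le_epsilon)
  fix e :: real assume e: "0 < e"
  obtain y where y: "y < k" "\<psi> y \<le> e" using ex[OF e] by blast
  have "\<psi> k \<le> ((q - k) * \<psi> y + (k - y) * \<psi> q) / (q - y)" using convex_between[OF cv y(1) kq] .
  also have "\<dots> \<le> ((q - y) * e) / (q - y)"
  proof (rule divide_right_mono)
    have "(q - k) * \<psi> y \<le> (q - k) * e" using y kq by (intro mult_left_mono) auto
    moreover have "(k - y) * \<psi> q \<le> (k - y) * e" using y q e by (intro mult_left_mono) auto
    ultimately show "(q - k) * \<psi> y + (k - y) * \<psi> q \<le> (q - y) * e" by (simp add: algebra_simps)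
  qed (use y kq in auto)
  also have "\<dots> = e" using y kq by simp
  finally show "\<psi> k \<le> 0 + e" by simp
qed

lemma eps_right:
  fixes \<psi> :: "real \<Rightarrow> real"
  assumes cv: "convex_on UNIV \<psi>" and qk: "q < k" and q: "\<psi> q \<le> c1 * q + c0"
    and ex: "\<And>e. 0 < e \<Longrightarrow> \<exists>z>k. \<psi> z \<le> c1 * z + c0 + e"
  shows "\<psi> k \<le> c1 * k + c0"
proof (rule field_le_epsilon)
  fix e :: real assume e: "0 < e"
  obtain z where z: "k < z" "\<psi> z \<le> c1 * z + c0 + e" using ex[OF e] by blast
  have "\<psi> k \<le> ((z - k) * \<psi> q + (k - q) * \<psi> z) / (z - q)" using convex_between[OF cv qk z(1)] .
  also have "\<dots> \<le> ((z - k) * (c1 * q + c0) + (k - q) * (c1 * z + c0 + e)) / (z - q)"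
  proof (rule divide_right_mono)
    have "(z - k) * \<psi> q \<le> (z - k) * (c1 * q + c0)" using z q by (intro mult_left_mono) auto
    moreover have "(k - q) * \<psi> z \<le> (k - q) * (c1 * z + c0 + e)" using z qk by (intro mult_left_mono) auto
    ultimately show "(z - k) * \<psi> q + (k - q) * \<psi> z \<le> (z - k) * (c1 * q + c0) + (k - q) * (c1 * z + c0 + e)"
      by simp
  qed (use z qk in auto)
  also have "\<dots> = c1 * k + c0 + (k - q) * e / (z - q)"
    using z qk by (simp add: field_simps)
  also have "\<dots> \<le> c1 * k + c0 + e"
  proof -
    have "(k - q) * e \<le> (z - q) * e" using z e by (intro mult_right_mono) auto
    then have "(k - q) * e / (z - q) \<le> e" using z qk by (simp add: divide_le_eq mult.commute)
    then show ?thesis by simp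
  qed
  finally show "\<psi> k \<le> c1 * k + c0 + e" .
qed

locale qs2 = qs +
  fixes \<mu> :: "real measure"
  assumes mu: "fin_meas1 \<mu>" and E: "E_le \<mu> \<nu>" and mpos: "0 < measure \<mu> UNIV"
    and mlt: "measure \<mu> UNIV < measure \<nu> UNIV"
begin

definition "m = measure \<mu> UNIV"
definition "b = bary \<mu>"
definition "aa = m / nn"
definition "dl = 1 - m / nn"
definition "S p = {0<..<p} \<union> {p + dl..<1::real}"

lemma aa_dl: "0 < aa" "aa < 1" "0 < dl" "dl < 1" "aa + dl = 1"
  using mpos mlt nn_pos by (auto simp: aa_def dl_def m_def nn_def field_simps)

lemma S_borel: "S p \<in> sets borel" by (simp add: S_def)

lemma S_mem: "0 < r \<Longrightarrow> r < 1 \<Longrightarrow> (r \<in> S p) = (r < p \<or> p + dl \<le> r)"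
  by (auto simp: S_def)

lemma S_ind: "0 \<le> p \<Longrightarrow> 0 < r \<Longrightarrow> r < 1 \<Longrightarrow>
    indicator (S p) r = indicator {..<p} r + indicator {..<1} r - (indicator {..<p + dl} r :: real)"
  using aa_dl by (auto simp: S_mem indicator_def)

lemma mass_S: "0 \<le> p \<Longrightarrow> p \<le> aa \<Longrightarrow> measure (\<eta>S (S p)) UNIV = m"
proof -
  assume p: "0 \<le> p" "p \<le> aa"
  have i: "integrable \<Omega> (\<lambda>r. c * indicator {..<t} r :: real)" for c t by (rule int_ind_\<Omega>) simp
  have "measure (\<eta>S (S p)) UNIV = (\<integral>r. nn * indicator (S p) r \<partial>\<Omega>)" by (rule massS[OF S_borel])
  also have "\<dots> = (\<integral>r. nn * indicator {..<p} r + nn * indicator {..<1} r - nn * indicator {..<p + dl} r \<partial>\<Omega>)"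
    by (rule int_cong_\<Omega>) (simp add: S_ind[OF p(1)] algebra_simps)
  also have "\<dots> = nn * (\<integral>r. indicator {..<p} r \<partial>\<Omega>) + nn * (\<integral>r. indicator {..<1} r \<partial>\<Omega>) - nn * (\<integral>r. indicator {..<p + dl} r \<partial>\<Omega>)"
    using i by simp
  also have "\<dots> = nn * p + nn * 1 - nn * (p + dl)"
  proof -
    have e1: "(\<integral>r. indicator {..<p} r \<partial>\<Omega>) = p" using p aa_dl by (intro int_ind_lt) auto
    have e2: "(\<integral>r. indicator {..<1} r \<partial>\<Omega>) = (1::real)" by (intro int_ind_lt) auto
    have e3: "(\<integral>r. indicator {..<p + dl} r \<partial>\<Omega>) = p + dl" using p aa_dl by (intro int_ind_lt) auto
    show ?thesis unfolding e1 e2 e3 ..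
  qed
  also have "\<dots> = m" using aa_dl nn_pos by (simp add: dl_def algebra_simps)
  finally show ?thesis .
qed

definition "Mf p = bary (\<eta>S (S p))"

lemma Mf_eq: "0 \<le> p \<Longrightarrow> Mf p = nn * G p + nn * G 1 - nn * G (p + dl)"
proof -
  assume p: "0 \<le> p"
  have i: "integrable \<Omega> (\<lambda>r. c * indicator {..<t} r * Q r :: real)" for c t by (rule int_Q_ind) simp
  have "Mf p = (\<integral>r. nn * indicator (S p) r * Q r \<partial>\<Omega>)" unfolding Mf_def by (rule baryS[OF S_borel])
  also have "\<dots> = (\<integral>r. nn * indicator {..<p} r * Q r + nn * indicator {..<1} r * Q r - nn * indicator {..<p + dl} r * Q r \<partial>\<Omega>)"
    by (rule int_cong_\<Omega>) (simp add: S_ind[OF p] algebra_simps)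
  also have "\<dots> = nn * G p + nn * G 1 - nn * G (p + dl)"
    using i unfolding G_def by (simp add: mult.assoc)
  finally show ?thesis .
qed

lemma Mf_cont: "continuous_on {0..aa} Mf"
proof -
  have "continuous_on {0..aa} (\<lambda>p. nn * G p + nn * G 1 - nn * G (p + dl))"
    by (intro continuous_intros continuous_on_compose2[OF G_cont]) auto
  then show ?thesis by (rule continuous_on_cong[THEN iffD1, rotated 2]) (auto simp: Mf_eq)
qed

end

context qs2
begin

lemma Qk_le: "0 < r \<Longrightarrow> r \<le> r' \<Longrightarrow> r' < 1 \<Longrightarrow> Q r \<le> Q r'" by (rule Q_le)

lemma Mf_0: "b \<le> Mf 0"
proof -
  define k where "k = Q dl"
  have i1: "integrable \<Omega> (\<lambda>r. nn * indicator (S 0) r * Q r)" by (rule int_Q_ind[OF S_borel])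
  have i2: "integrable \<Omega> (\<lambda>r. k * (nn * indicator (S 0) r))" by (rule int_ind_\<Omega>[OF S_borel, of "k * nn", simplified mult.assoc])
  have "callf \<nu> k = (\<integral>r. nn * max (Q r - k) 0 \<partial>\<Omega>)" by (rule call_nu)
  also have "\<dots> = (\<integral>r. nn * indicator (S 0) r * Q r - k * (nn * indicator (S 0) r) \<partial>\<Omega>)"
  proof (rule int_cong_\<Omega>)
    fix r :: real assume r: "0 < r" "r < 1"
    show "nn * max (Q r - k) 0 = nn * indicator (S 0) r * Q r - k * (nn * indicator (S 0) r)"
    proof (cases "dl \<le> r")
      case True
      then have "k \<le> Q r" unfolding k_def using aa_dl r by (intro Qk_le) auto
      then show ?thesis using True r by (simp add: S_mem indicator_def algebra_simps)
    next
      case False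
      then have "Q r \<le> k" unfolding k_def using aa_dl r by (intro Qk_le) auto
      then show ?thesis using False r by (simp add: S_mem indicator_def)
    qed
  qed
  also have "\<dots> = (\<integral>r. nn * indicator (S 0) r * Q r \<partial>\<Omega>) - (\<integral>r. k * (nn * indicator (S 0) r) \<partial>\<Omega>)"
    by (rule Bochner_Integration.integral_diff[OF i1 i2])
  also have "(\<integral>r. k * (nn * indicator (S 0) r) \<partial>\<Omega>) = k * m"
  proof -
    have ms: "(\<integral>r. nn * indicator (S 0) r \<partial>\<Omega>) = m" using massS[OF S_borel, of 0] mass_S[of 0] aa_dl by simp
    show ?thesis by (subst integral_mult_right_zero) (subst ms, rule refl)
  qed
  also have "(\<integral>r. nn * indicator (S 0) r * Q r \<partial>\<Omega>) = Mf 0" unfolding Mf_def by (rule baryS[OF S_borel, symmetric])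
  finally have c: "callf \<nu> k = Mf 0 - k * m" .
  have "b - m * k \<le> callf \<mu> k" using call_lower[OF mu, of k] by (simp add: b_def m_def)
  also have "\<dots> \<le> callf \<nu> k" by (rule E_le_call[OF mu nu E])
  finally show ?thesis using c by (simp add: algebra_simps)
qed

lemma Mf_aa: "Mf aa \<le> b"
proof -
  define k where "k = Q aa"
  have i1: "integrable \<Omega> (\<lambda>r. nn * indicator (S aa) r * Q r)" by (rule int_Q_ind[OF S_borel])
  have i2: "integrable \<Omega> (\<lambda>r. k * (nn * indicator (S aa) r))" by (rule int_ind_\<Omega>[OF S_borel, of "k * nn", simplified mult.assoc])
  have "putf \<nu> k = (\<integral>r. nn * max (k - Q r) 0 \<partial>\<Omega>)" by (rule put_nu)
  also have "\<dots> = (\<integral>r. k * (nn * indicator (S aa) r) - nn * indicator (S aa) r * Q r \<partial>\<Omega>)"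
  proof (rule int_cong_\<Omega>)
    fix r :: real assume r: "0 < r" "r < 1"
    have mem: "(r \<in> S aa) = (r < aa)" using S_mem[OF r, of aa] aa_dl r by auto
    show "nn * max (k - Q r) 0 = k * (nn * indicator (S aa) r) - nn * indicator (S aa) r * Q r"
    proof (cases "r < aa")
      case True
      then have "Q r \<le> k" unfolding k_def using aa_dl r by (intro Qk_le) auto
      then show ?thesis using True mem by (simp add: indicator_def algebra_simps)
    next
      case False
      then have "k \<le> Q r" unfolding k_def using aa_dl r by (intro Qk_le) auto
      then show ?thesis using False mem by (simp add: indicator_def)
    qed
  qed
  also have "\<dots> = (\<integral>r. k * (nn * indicator (S aa) r) \<partial>\<Omega>) - (\<integral>r. nn * indicator (S aa) r * Q r \<partial>\<Omega>)"
    by (rule Bochner_Integration.integral_diff[OF i2 i1])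
  also have "(\<integral>r. k * (nn * indicator (S aa) r) \<partial>\<Omega>) = k * m"
  proof -
    have ms: "(\<integral>r. nn * indicator (S aa) r \<partial>\<Omega>) = m" using massS[OF S_borel, of aa] mass_S[of aa] aa_dl by simp
    show ?thesis by (subst integral_mult_right_zero) (subst ms, rule refl)
  qed
  also have "(\<integral>r. nn * indicator (S aa) r * Q r \<partial>\<Omega>) = Mf aa" unfolding Mf_def by (rule baryS[OF S_borel, symmetric])
  finally have c: "putf \<nu> k = k * m - Mf aa" .
  have "m * k - putf \<nu> k \<le> m * k - putf \<mu> k" using E_le_put[OF mu nu E, of k] by simp
  also have "\<dots> \<le> b" using put_lower[OF mu, of k] by (simp add: b_def m_def)
  finally show ?thesis using c by (simp add: algebra_simps)
qed

lemma exists_p: "\<exists>p. 0 \<le> p \<and> p \<le> aa \<and> Mf p = b"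
  using IVT2'[of Mf aa b 0, OF Mf_aa Mf_0 _ Mf_cont] aa_dl by auto

end

context qs2
begin

lemma fact_i: "0 < p \<Longrightarrow> p \<le> aa \<Longrightarrow> k \<le> Q p \<Longrightarrow> putf (\<eta>S (S p)) k = putf \<nu> k"
  unfolding putS[OF S_borel] put_nu
proof (rule int_cong_\<Omega>)
  fix r :: real assume p: "0 < p" "p \<le> aa" and k: "k \<le> Q p" and r: "0 < r" "r < 1"
  show "nn * indicator (S p) r * max (k - Q r) 0 = nn * max (k - Q r) 0"
  proof (cases "r \<in> S p")
    case False
    then have "p \<le> r" using S_mem[OF r] by auto
    then have "Q p \<le> Q r" using p r by (intro Qk_le) auto
    then show ?thesis using k False by simp
  qed simp
qed

lemma fact_ii: "0 \<le> p \<Longrightarrow> p < aa \<Longrightarrow> Q (p + dl) \<le> k \<Longrightarrow> callf (\<eta>S (S p)) k = callf \<nu> k"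
  unfolding callS[OF S_borel] call_nu
proof (rule int_cong_\<Omega>)
  fix r :: real assume p: "0 \<le> p" "p < aa" and k: "Q (p + dl) \<le> k" and r: "0 < r" "r < 1"
  show "nn * indicator (S p) r * max (Q r - k) 0 = nn * max (Q r - k) 0"
  proof (cases "r \<in> S p")
    case False
    then have "r < p + dl" using S_mem[OF r] by auto
    then have "Q r \<le> Q (p + dl)" using p r aa_dl by (intro Qk_le) auto
    then show ?thesis using k False by simp
  qed simp
qed

lemma fact_iii: "k \<le> Q dl \<Longrightarrow> putf (\<eta>S (S 0)) k = 0"
proof -
  assume k: "k \<le> Q dl"
  have "putf (\<eta>S (S 0)) k = (\<integral>r. 0 \<partial>\<Omega>)"
    unfolding putS[OF S_borel]
  proof (rule int_cong_\<Omega>)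
    fix r :: real assume r: "0 < r" "r < 1"
    show "nn * indicator (S 0) r * max (k - Q r) 0 = 0"
    proof (cases "r \<in> S 0")
      case True
      then have "dl \<le> r" using S_mem[OF r] r by auto
      then have "Q dl \<le> Q r" using r aa_dl by (intro Qk_le) auto
      then show ?thesis using k by simp
    qed simp
  qed
  then show ?thesis by simp
qed

lemma fact_iv: "Q aa \<le> k \<Longrightarrow> callf (\<eta>S (S aa)) k = 0"
proof -
  assume k: "Q aa \<le> k"
  have "callf (\<eta>S (S aa)) k = (\<integral>r. 0 \<partial>\<Omega>)"
    unfolding callS[OF S_borel]
  proof (rule int_cong_\<Omega>)
    fix r :: real assume r: "0 < r" "r < 1"
    show "nn * indicator (S aa) r * max (Q r - k) 0 = 0"
    proof (cases "r \<in> S aa")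
      case True
      then have "r < aa" using S_mem[OF r] r aa_dl by auto
      then have "Q r \<le> Q aa" using r aa_dl by (intro Qk_le) auto
      then show ?thesis using k by simp
    qed simp
  qed
  then show ?thesis by simp
qed

lemma fact_v:
  assumes p: "0 < p" "p < aa" and k: "Q p \<le> k" "k \<le> Q (p + dl)"
  shows "putf (\<eta>S (S p)) k = k * (\<integral>r. nn * indicator {..<p} r \<partial>\<Omega>) - (\<integral>r. nn * indicator {..<p} r * Q r \<partial>\<Omega>)"
proof -
  have i1: "integrable \<Omega> (\<lambda>r. k * (nn * indicator {..<p} r))" by (rule int_ind_\<Omega>[of _ "k * nn", simplified mult.assoc]) simp
  have i2: "integrable \<Omega> (\<lambda>r. nn * indicator {..<p} r * Q r)" by (rule int_Q_ind) simp
  have "putf (\<eta>S (S p)) k = (\<integral>r. k * (nn * indicator {..<p} r) - nn * indicator {..<p} r * Q r \<partial>\<Omega>)"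
    unfolding putS[OF S_borel]
  proof (rule int_cong_\<Omega>)
    fix r :: real assume r: "0 < r" "r < 1"
    consider "r < p" | "p \<le> r" "r < p + dl" | "p + dl \<le> r" by linarith
    then show "nn * indicator (S p) r * max (k - Q r) 0 = k * (nn * indicator {..<p} r) - nn * indicator {..<p} r * Q r"
    proof cases
      case 1
      then have "Q r \<le> Q p" using r p aa_dl by (intro Qk_le) auto
      then show ?thesis using 1 k S_mem[OF r, of p] by (simp add: indicator_def algebra_simps)
    next
      case 2
      then show ?thesis using S_mem[OF r, of p] by (simp add: indicator_def)
    next
      case 3
      then have "Q (p + dl) \<le> Q r" using r p aa_dl by (intro Qk_le) auto
      then show ?thesis using 3 k S_mem[OF r, of p] p aa_dl by (simp add: indicator_def)
    qed
  qed
  also have "\<dots> = (\<integral>r. k * (nn * indicator {..<p} r) \<partial>\<Omega>) - (\<integral>r. nn * indicator {..<p} r * Q r \<partial>\<Omega>)"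
    by (rule Bochner_Integration.integral_diff[OF i1 i2])
  also have "(\<integral>r. k * (nn * indicator {..<p} r) \<partial>\<Omega>) = k * (\<integral>r. nn * indicator {..<p} r \<partial>\<Omega>)"
    by (rule integral_mult_right_zero)
  finally show ?thesis .
qed

end

context qs2
begin

lemma qs2_result:
  "putf (counter_shadow \<nu> \<mu>) = convex_env (Ptilde \<nu> \<mu>)
    \<and> (\<forall>a b. a \<le> b \<longrightarrow> (\<exists>da db.
          ((\<lambda>y. (convex_env (Ptilde \<nu> \<mu>) y - convex_env (Ptilde \<nu> \<mu>) a) / (y - a)) \<longlongrightarrow> da) (at_right a)
        \<and> ((\<lambda>y. (convex_env (Ptilde \<nu> \<mu>) y - convex_env (Ptilde \<nu> \<mu>) b) / (y - b)) \<longlongrightarrow> db) (at_right b)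
        \<and> measure (counter_shadow \<nu> \<mu>) {a<..b} = db - da))"
proof -
  obtain p where p: "0 \<le> p" "p \<le> aa" "Mf p = b" using exists_p by blast
  define \<eta> where "\<eta> = \<eta>S (S p)"
  have \<eta>fm: "fin_meas1 \<eta>" unfolding \<eta>_def by (rule \<eta>S_fm[OF S_borel])
  have le: "meas_le \<eta> \<nu>" unfolding \<eta>_def by (rule \<eta>S_le[OF S_borel])
  have mass: "measure \<eta> UNIV = measure \<mu> UNIV" unfolding \<eta>_def using mass_S[OF p(1,2)] by (simp add: m_def)
  have mean: "bary \<eta> = bary \<mu>" using p(3) by (simp add: \<eta>_def Mf_def b_def)
  have par: "putf \<eta> k = callf \<eta> k + m * k - b" for k
    using parity[OF \<eta>fm, of k] mass mean by (simp add: m_def b_def)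
  have Pt: "Ptilde \<nu> \<mu> k = min (putf \<nu> k) (callf \<nu> k + m * k - b)" for k
    by (simp add: Ptilde_def m_def b_def)
  show ?thesis
  proof (rule main_generic[OF mu nu E \<eta>fm le mass mean])
    fix k
    show "putf \<eta> k \<le> Ptilde \<nu> \<mu> k"
      using le_put[OF nu fm_sets[OF \<eta>fm] le] by (intro put_below_Ptilde[OF nu \<eta>fm mass mean]) auto
  next
    fix \<psi> :: "real \<Rightarrow> real" and k
    assume cv: "convex_on UNIV \<psi>" and hp: "\<forall>y. \<psi> y \<le> Ptilde \<nu> \<mu> y"
    have hP: "\<psi> y \<le> putf \<nu> y" for y using hp[rule_format, of y] Pt[of y] by simp
    have hC: "\<psi> y \<le> callf \<nu> y + m * y - b" for y using hp[rule_format, of y] Pt[of y] by simp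
    have exl: "\<exists>y<x. \<psi> y \<le> e" if e: "0 < e" for x e
    proof -
      obtain k0 where k0: "putf \<nu> k0 < e" using put_small[OF nu e] by blast
      define y where "y = min k0 (x - 1)"
      have "\<psi> y \<le> putf \<nu> y" by (rule hP)
      also have "\<dots> \<le> putf \<nu> k0" unfolding y_def by (intro put_mono[OF nu]) simp
      finally show ?thesis using k0 by (intro exI[of _ y]) (auto simp: y_def)
    qed
    have exr: "\<exists>z>x. \<psi> z \<le> m * z + (- b) + e" if e: "0 < e" for x e
    proof -
      obtain k0 where k0: "callf \<nu> k0 < e" using call_small[OF nu e] by blast
      define z where "z = max k0 (x + 1)"
      have "\<psi> z \<le> callf \<nu> z + m * z - b" by (rule hC)
      also have "callf \<nu> z \<le> callf \<nu> k0" unfolding z_def by (intro call_mono[OF nu]) simp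
      finally show ?thesis using k0 by (intro exI[of _ z]) (auto simp: z_def)
    qed
    consider "p = 0" | "p = aa" | "0 < p" "p < aa" using p(1,2) by linarith
    then show "\<psi> k \<le> putf \<eta> k"
    proof cases
      case 1
      have right: "\<psi> x \<le> putf \<eta> x" if "Q dl \<le> x" for x
      proof -
        have "callf \<eta> x = callf \<nu> x" unfolding \<eta>_def 1 using that aa_dl by (intro fact_ii) auto
        then show ?thesis using hC[of x] par[of x] by simp
      qed
      show ?thesis
      proof (cases "Q dl \<le> k")
        case True then show ?thesis by (rule right)
      next
        case False
        have z: "putf \<eta> x = 0" if "x \<le> Q dl" for x unfolding \<eta>_def 1 using that by (rule fact_iii)
        have "\<psi> (Q dl) \<le> 0" using right[of "Q dl"] z[of "Q dl"] by simp
        then have "\<psi> k \<le> 0" using False by (intro eps_left[OF cv, of k "Q dl"] exl) auto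
        then show ?thesis using z[of k] False by simp
      qed
    next
      case 2
      have left: "\<psi> x \<le> putf \<eta> x" if "x \<le> Q aa" for x
      proof -
        have "putf \<eta> x = putf \<nu> x" unfolding \<eta>_def 2 using that aa_dl by (intro fact_i) auto
        then show ?thesis using hP[of x] by simp
      qed
      show ?thesis
      proof (cases "k \<le> Q aa")
        case True then show ?thesis by (rule left)
      next
        case False
        have z: "putf \<eta> x = m * x + (- b)" if "Q aa \<le> x" for x
          using par[of x] fact_iv[OF that] unfolding \<eta>_def 2 by simp
        have "\<psi> (Q aa) \<le> m * Q aa + (- b)" using left[of "Q aa"] z[of "Q aa"] by simp
        then have "\<psi> k \<le> m * k + (- b)" using False by (intro eps_right[OF cv, of "Q aa" k] exr) auto
        then show ?thesis using z[of k] False by simp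
      qed
    next
      case 3
      define q1 where "q1 = Q p"
      define q2 where "q2 = Q (p + dl)"
      have q12: "q1 \<le> q2" unfolding q1_def q2_def using 3 aa_dl by (intro Qk_le) auto
      have left: "\<psi> x \<le> putf \<eta> x" if "x \<le> q1" for x
      proof -
        have "putf \<eta> x = putf \<nu> x" unfolding \<eta>_def using that 3 by (intro fact_i) (auto simp: q1_def)
        then show ?thesis using hP[of x] by simp
      qed
      have right: "\<psi> x \<le> putf \<eta> x" if "q2 \<le> x" for x
      proof -
        have "callf \<eta> x = callf \<nu> x" unfolding \<eta>_def using that 3 by (intro fact_ii) (auto simp: q2_def)
        then show ?thesis using hC[of x] par[of x] by simp
      qed
      define A where "A = (\<integral>r. nn * indicator {..<p} r \<partial>\<Omega>)"
      define B where "B = (\<integral>r. nn * indicator {..<p} r * Q r \<partial>\<Omega>)"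
      have mid: "putf \<eta> x = x * A - B" if "q1 \<le> x" "x \<le> q2" for x
        unfolding \<eta>_def A_def B_def using 3 that by (intro fact_v) (auto simp: q1_def q2_def)
      show ?thesis
      proof (cases "k \<le> q1 \<or> q2 \<le> k")
        case True then show ?thesis using left right by blast
      next
        case False
        then have k: "q1 < k" "k < q2" by auto
        have "\<psi> k \<le> ((q2 - k) * \<psi> q1 + (k - q1) * \<psi> q2) / (q2 - q1)"
          by (rule convex_between[OF cv k])
        also have "\<dots> \<le> ((q2 - k) * putf \<eta> q1 + (k - q1) * putf \<eta> q2) / (q2 - q1)"
          using k left[of q1] right[of q2]
          by (intro divide_right_mono add_mono mult_left_mono) auto
        also have "\<dots> = ((q2 - k) * (q1 * A - B) + (k - q1) * (q2 * A - B)) / (q2 - q1)"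
          using mid[of q1] mid[of q2] q12 by simp
        also have "\<dots> = k * A - B" using k by (simp add: field_simps)
        also have "\<dots> = putf \<eta> k" using mid[of k] k by simp
        finally show ?thesis .
      qed
    qed
  qed
qed

end

lemma zero_mass_case:
  assumes mu: "fin_meas1 \<mu>" and nu: "fin_meas1 \<nu>" and E: "E_le \<mu> \<nu>" and m0: "measure \<mu> UNIV = 0"
  shows "putf (counter_shadow \<nu> \<mu>) = convex_env (Ptilde \<nu> \<mu>)
    \<and> (\<forall>a b. a \<le> b \<longrightarrow> (\<exists>da db.
          ((\<lambda>y. (convex_env (Ptilde \<nu> \<mu>) y - convex_env (Ptilde \<nu> \<mu>) a) / (y - a)) \<longlongrightarrow> da) (at_right a)
        \<and> ((\<lambda>y. (convex_env (Ptilde \<nu> \<mu>) y - convex_env (Ptilde \<nu> \<mu>) b) / (y - b)) \<longlongrightarrow> db) (at_right b)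
        \<and> measure (counter_shadow \<nu> \<mu>) {a<..b} = db - da))"
proof -
  have e0: "emeasure \<mu> (space \<mu>) = 0"
    using m0 fm_finite[OF mu] fm_space[OF mu] by (simp add: finite_measure.emeasure_eq_measure)
  have AE: "AE x in \<mu>. P x" for P
    by (rule AE_I[of _ _ "space \<mu>"]) (auto simp: e0)
  have p0: "putf \<mu> k = 0" for k unfolding putf_def by (rule integral_eq_zero_AE) (rule AE)
  have b0: "bary \<mu> = 0" unfolding bary_def by (rule integral_eq_zero_AE) (rule AE)
  have Pt: "Ptilde \<nu> \<mu> k = min (putf \<nu> k) (callf \<nu> k)" for k by (simp add: Ptilde_def m0 b0)
  show ?thesis
  proof (rule main_generic[OF mu nu E mu])
    show "meas_le \<mu> \<nu>" unfolding meas_le_def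
    proof
      fix A :: "real set" assume "A \<in> sets borel"
      have "emeasure \<mu> A \<le> emeasure \<mu> (space \<mu>)" by (rule emeasure_space)
      then show "emeasure \<mu> A \<le> emeasure \<nu> A" using e0 by simp
    qed
    show "measure \<mu> UNIV = measure \<mu> UNIV" "bary \<mu> = bary \<mu>" by simp_all
    fix k
    show "putf \<mu> k \<le> Ptilde \<nu> \<mu> k"
      using E_le_put[OF mu nu E] E_le_call[OF mu nu E] by (intro put_below_Ptilde[OF nu mu]) auto
  next
    fix \<psi> :: "real \<Rightarrow> real" and k
    assume cv: "convex_on UNIV \<psi>" and hp: "\<forall>y. \<psi> y \<le> Ptilde \<nu> \<mu> y"
    have "\<psi> k \<le> 0"
    proof (rule field_le_epsilon)
      fix e :: real assume e: "0 < e"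
      obtain k0 where k0: "putf \<nu> k0 < e" using put_small[OF nu e] by blast
      obtain k1 where k1: "callf \<nu> k1 < e" using call_small[OF nu e] by blast
      define y where "y = min k0 (k - 1)"
      define z where "z = max k1 (k + 1)"
      have yk: "y < k" and kz: "k < z" by (auto simp: y_def z_def)
      have "\<psi> y \<le> putf \<nu> y" using hp[rule_format, of y] Pt[of y] by simp
      also have "\<dots> \<le> putf \<nu> k0" unfolding y_def by (intro put_mono[OF nu]) simp
      finally have \<psi>y: "\<psi> y \<le> e" using k0 by simp
      have "\<psi> z \<le> callf \<nu> z" using hp[rule_format, of z] Pt[of z] by simp
      also have "\<dots> \<le> callf \<nu> k1" unfolding z_def by (intro call_mono[OF nu]) simp
      finally have \<psi>z: "\<psi> z \<le> e" using k1 by simp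
      have "\<psi> k \<le> ((z - k) * \<psi> y + (k - y) * \<psi> z) / (z - y)" by (rule convex_between[OF cv yk kz])
      also have "\<dots> \<le> ((z - k) * e + (k - y) * e) / (z - y)"
        using yk kz \<psi>y \<psi>z by (intro divide_right_mono add_mono mult_left_mono) auto
      also have "\<dots> = e" using yk kz by (simp add: field_simps)
      finally show "\<psi> k \<le> 0 + e" by simp
    qed
    then show "\<psi> k \<le> putf \<mu> k" by (simp add: p0)
  qed
qed

lemma equal_mass_case:
  assumes mu: "fin_meas1 \<mu>" and nu: "fin_meas1 \<nu>" and E: "E_le \<mu> \<nu>"
    and meq: "measure \<mu> UNIV = measure \<nu> UNIV"
  shows "putf (counter_shadow \<nu> \<mu>) = convex_env (Ptilde \<nu> \<mu>)
    \<and> (\<forall>a b. a \<le> b \<longrightarrow> (\<exists>da db.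
          ((\<lambda>y. (convex_env (Ptilde \<nu> \<mu>) y - convex_env (Ptilde \<nu> \<mu>) a) / (y - a)) \<longlongrightarrow> da) (at_right a)
        \<and> ((\<lambda>y. (convex_env (Ptilde \<nu> \<mu>) y - convex_env (Ptilde \<nu> \<mu>) b) / (y - b)) \<longlongrightarrow> db) (at_right b)
        \<and> measure (counter_shadow \<nu> \<mu>) {a<..b} = db - da))"
proof -
  have up: "bary \<mu> \<le> bary \<nu> + putf \<nu> k" for k
    using call_lower[OF mu, of k] E_le_call[OF mu nu E, of k] parity[OF nu, of k] meq by simp
  have lo: "bary \<nu> - callf \<nu> k \<le> bary \<mu>" for k
    using put_lower[OF mu, of k] E_le_put[OF mu nu E, of k] parity[OF nu, of k] meq by simp
  have b1: "bary \<mu> \<le> bary \<nu>"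
  proof (rule field_le_epsilon)
    fix e :: real assume "0 < e"
    then obtain k where "putf \<nu> k < e" using put_small[OF nu] by blast
    then show "bary \<mu> \<le> bary \<nu> + e" using up[of k] by simp
  qed
  have b2: "bary \<nu> \<le> bary \<mu>"
  proof (rule field_le_epsilon)
    fix e :: real assume "0 < e"
    then obtain k where "callf \<nu> k < e" using call_small[OF nu] by blast
    then show "bary \<nu> \<le> bary \<mu> + e" using lo[of k] by simp
  qed
  have mean: "bary \<nu> = bary \<mu>" using b1 b2 by simp
  show ?thesis
  proof (rule main_generic[OF mu nu E nu])
    show "meas_le \<nu> \<nu>" by (simp add: meas_le_def)
    show "measure \<nu> UNIV = measure \<mu> UNIV" using meq by simp
    show "bary \<nu> = bary \<mu>" by (rule mean)
    fix k
    show "putf \<nu> k \<le> Ptilde \<nu> \<mu> k"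
      using meq mean by (intro put_below_Ptilde[OF nu nu]) auto
  next
    fix \<psi> :: "real \<Rightarrow> real" and k
    assume "convex_on UNIV \<psi>" and hp: "\<forall>y. \<psi> y \<le> Ptilde \<nu> \<mu> y"
    then show "\<psi> k \<le> putf \<nu> k" by (auto simp: Ptilde_def min_le_iff_disj dest: spec[of _ k])
  qed
qed

theorem theorem3p4:
  fixes \<mu> \<nu> :: "real measure"
  assumes "fin_meas1 \<mu>" and "fin_meas1 \<nu>" and "E_le \<mu> \<nu>"
  shows "putf (counter_shadow \<nu> \<mu>) = convex_env (Ptilde \<nu> \<mu>)
    \<and> (\<forall>a b. a \<le> b \<longrightarrow> (\<exists>da db.
          ((\<lambda>y. (convex_env (Ptilde \<nu> \<mu>) y - convex_env (Ptilde \<nu> \<mu>) a) / (y - a)) \<longlongrightarrow> da) (at_right a)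
        \<and> ((\<lambda>y. (convex_env (Ptilde \<nu> \<mu>) y - convex_env (Ptilde \<nu> \<mu>) b) / (y - b)) \<longlongrightarrow> db) (at_right b)
        \<and> measure (counter_shadow \<nu> \<mu>) {a<..b} = db - da))"
proof -
  note mu = assms(1) and nu = assms(2) and E = assms(3)
  have mle: "measure \<mu> UNIV \<le> measure \<nu> UNIV" by (rule E_le_mass[OF mu nu E])
  consider "measure \<mu> UNIV = 0" | "0 < measure \<mu> UNIV" "measure \<mu> UNIV = measure \<nu> UNIV"
    | "0 < measure \<mu> UNIV" "measure \<mu> UNIV < measure \<nu> UNIV"
    using mle measure_nonneg[of \<mu> UNIV] by linarith
  then show ?thesis
  proof cases
    case 1 then show ?thesis by (rule zero_mass_case[OF mu nu E])
  next
    case 2 then show ?thesis using equal_mass_case[OF mu nu E] by simp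
  next
    case 3
    interpret qs2 \<nu> \<mu>
      using 3 mu nu E by unfold_locales auto
    show ?thesis by (rule qs2_result)
  qed
qed

end
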